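(* There exist a common knowledge debate game, a common knowledge distinguishing debate game, and a private information distinguishing debate game each of which has the following property: the minimum error over all policies is strictly less than the minimum error over policies under which the agents use pure strategies in equilibrium.
   Context: Let $\delta$ be a special default action. CKDG: a tuple $(A_1,A_2,S,P,C_1,C_2,u)$ consisting of finite sets $A_i\not\ni\delta$, a finite set $S$, a probability mass function $P$ on $S$, maps $C_i:S\to\mathcal P(A_i)$, and $u:\{1,2\}\times S\to\mathbb R$. A policy is $M:\{1,2\}\times(A_1\cup\{\delta\})\times(A_2\cup\{\delta\})\to[0,1]$ with $M(1,\cdot,\cdot)+M(2,\cdot,\cdot)=1$. For each scenario $s$ the agents play the zero-sum game with payoff matrices $M(i,\cdot,\cdot)$, with agent 1 restricted to $C_1(s)\cup\{\delta\}$ and agent 2 to $C_2(s)\cup\{\delta\}$; $w^i_M(s)$ is its value to agent $i$. The error is $\mathbb E_{s\sim P}[\,|u(1,s)-u(2,s)|w^1_M(s)$ if $u(1,s)\le u(2,s)$, else $|u(1,s)-u(2,s)|w^2_M(s)\,]$. The agents use pure strategies in equilibrium under $M$ if every scenario's game has a pure-strategy Nash equilibrium. CKDDG: a tuple $(A,S,P,C_w,C_l)$ with $A$ finite, $\delta\notin A$, $S$ finite, $P$ a probability mass function on $S$, and $C_w,C_l:S\to\mathcal P(A)$. Policies, error and pure-strategy equilibria are those of the induced CKDG $(A,A,\{1,2\}\times S,P',C'_1,C'_2,u')$, where: - $P'((i,s))=P(s)/2$; - $C'_j((i,s))=C_w(s)$ if $i=j$, else $C_l(s)$; - $u'(j,(i,s))=[i=j]$.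 PIDDG: a tuple of the same form. A policy is $M:\{1,2\}\times(A\cup\{\delta\})^2\to[0,1]$ with $M(1,\cdot,\cdot)+M(2,\cdot,\cdot)=1$. $G_1(B,M)$ is the following Bayesian game. Each agent has action set $A\cup\{\delta\}$. A scenario $s\sim P$ is drawn, and agent 1's type is $C_w(s)$ while agent 2's is $C_l(s)$. Payoffs are as follows: - if both agents play available actions, agent $i$ gets $M(i,a_1,a_2)$; - if exactly one plays an unavailable action, it gets $0$ and the other gets $1$; - if both play unavailable actions, each gets $1/2$. $G_2(B,M)$ swaps the types. The error is $\frac{v_1(G_2(B,M))+v_2(G_1(B,M))}{2}$, where $v_i$ is the value of the zero-sum Bayesian game to agent $i$. The agents use pure strategies in equilibrium if $G_1(B,M)$ and $G_2(B,M)$ each have a pure-strategy (type-contingent) equilibrium. *)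

theory Defs
  imports Complex_Main
begin

text \<open>The special default action delta is represented by None; an action a
  of a finite action set A is represented by Some a.  Agents are indexed by the
  naturals 1 and 2.\<close>

definition opt :: "'a set \<Rightarrow> 'a option set" where
  "opt A = insert None (Some ` A)"

definition pmf_on :: "'s set \<Rightarrow> ('s \<Rightarrow> real) \<Rightarrow> bool" where
  "pmf_on S P \<longleftrightarrow> (\<forall>s\<in>S. 0 \<le> P s) \<and> sum P S = 1"

definition mixed :: "'x set \<Rightarrow> ('x \<Rightarrow> real) \<Rightarrow> bool" where
  "mixed X p \<longleftrightarrow> (\<forall>x. 0 \<le> p x) \<and> (\<forall>x. x \<notin> X \<longrightarrow> p x = 0) \<and> sum p X = 1"

definition policy :: "'a option set \<Rightarrow> 'b option set \<Rightarrow> (nat \<Rightarrow> 'a option \<Rightarrow> 'b option \<Rightarrow> real) \<Rightarrow> bool" where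
  "policy X Y M \<longleftrightarrow> (\<forall>a\<in>X. \<forall>b\<in>Y. (\<forall>i\<in>{1,2}. 0 \<le> M i a b \<and> M i a b \<le> 1)
                         \<and> M 1 a b + M 2 a b = 1)"

definition strict_min_gap :: "('m \<Rightarrow> bool) \<Rightarrow> ('m \<Rightarrow> bool) \<Rightarrow> ('m \<Rightarrow> real) \<Rightarrow> bool" where
  "strict_min_gap Pol Pure E \<longleftrightarrow>
     (\<exists>M0 M1. Pol M0 \<and> (\<forall>M. Pol M \<longrightarrow> E M0 \<le> E M)
            \<and> Pol M1 \<and> Pure M1 \<and> (\<forall>M. Pol M \<and> Pure M \<longrightarrow> E M1 \<le> E M)
            \<and> E M0 < E M1)"

definition ckdg :: "'a set \<Rightarrow> 'b set \<Rightarrow> 's set \<Rightarrow> ('s \<Rightarrow> real) \<Rightarrow> ('s \<Rightarrow> 'a set) \<Rightarrow> ('s \<Rightarrow> 'b set)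
    \<Rightarrow> (nat \<Rightarrow> 's \<Rightarrow> real) \<Rightarrow> bool" where
  "ckdg A1 A2 S P C1 C2 u \<longleftrightarrow> finite A1 \<and> finite A2 \<and> finite S \<and> pmf_on S P
     \<and> (\<forall>s\<in>S. C1 s \<subseteq> A1 \<and> C2 s \<subseteq> A2)"

text \<open>Value (max-min over mixed strategies, which by the minimax theorem is the value)
  of the scenario-s zero-sum game to agent 1 and to agent 2.\<close>
definition ckdg_w1 :: "('s \<Rightarrow> 'a set) \<Rightarrow> ('s \<Rightarrow> 'b set) \<Rightarrow> (nat \<Rightarrow> 'a option \<Rightarrow> 'b option \<Rightarrow> real) \<Rightarrow> 's \<Rightarrow> real" where
  "ckdg_w1 C1 C2 M s = (SUP x\<in>Collect (mixed (opt (C1 s))).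
       INF b\<in>opt (C2 s). \<Sum>a\<in>opt (C1 s). x a * M 1 a b)"

definition ckdg_w2 :: "('s \<Rightarrow> 'a set) \<Rightarrow> ('s \<Rightarrow> 'b set) \<Rightarrow> (nat \<Rightarrow> 'a option \<Rightarrow> 'b option \<Rightarrow> real) \<Rightarrow> 's \<Rightarrow> real" where
  "ckdg_w2 C1 C2 M s = (SUP y\<in>Collect (mixed (opt (C2 s))).
       INF a\<in>opt (C1 s). \<Sum>b\<in>opt (C2 s). y b * M 2 a b)"

definition ckdg_error :: "'s set \<Rightarrow> ('s \<Rightarrow> real) \<Rightarrow> ('s \<Rightarrow> 'a set) \<Rightarrow> ('s \<Rightarrow> 'b set)
    \<Rightarrow> (nat \<Rightarrow> 's \<Rightarrow> real) \<Rightarrow> (nat \<Rightarrow> 'a option \<Rightarrow> 'b option \<Rightarrow> real) \<Rightarrow> real" where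
  "ckdg_error S P C1 C2 u M = (\<Sum>s\<in>S. P s *
      (if u 1 s \<le> u 2 s then \<bar>u 1 s - u 2 s\<bar> * ckdg_w1 C1 C2 M s
       else \<bar>u 1 s - u 2 s\<bar> * ckdg_w2 C1 C2 M s))"

definition ckdg_pure_eq_at :: "('s \<Rightarrow> 'a set) \<Rightarrow> ('s \<Rightarrow> 'b set) \<Rightarrow> (nat \<Rightarrow> 'a option \<Rightarrow> 'b option \<Rightarrow> real) \<Rightarrow> 's \<Rightarrow> bool" where
  "ckdg_pure_eq_at C1 C2 M s \<longleftrightarrow> (\<exists>a\<in>opt (C1 s). \<exists>b\<in>opt (C2 s).
      (\<forall>a'\<in>opt (C1 s). M 1 a' b \<le> M 1 a b) \<and> (\<forall>b'\<in>opt (C2 s). M 2 a b' \<le> M 2 a b))"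

definition ckdg_pure :: "'s set \<Rightarrow> ('s \<Rightarrow> 'a set) \<Rightarrow> ('s \<Rightarrow> 'b set) \<Rightarrow> (nat \<Rightarrow> 'a option \<Rightarrow> 'b option \<Rightarrow> real) \<Rightarrow> bool" where
  "ckdg_pure S C1 C2 M \<longleftrightarrow> (\<forall>s\<in>S. ckdg_pure_eq_at C1 C2 M s)"

definition ckddg :: "'a set \<Rightarrow> 's set \<Rightarrow> ('s \<Rightarrow> real) \<Rightarrow> ('s \<Rightarrow> 'a set) \<Rightarrow> ('s \<Rightarrow> 'a set) \<Rightarrow> bool" where
  "ckddg A S P Cw Cl \<longleftrightarrow> finite A \<and> finite S \<and> pmf_on S P \<and> (\<forall>s\<in>S. Cw s \<subseteq> A \<and> Cl s \<subseteq> A)"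

definition ind_S :: "'s set \<Rightarrow> (nat \<times> 's) set" where
  "ind_S S = {1,2} \<times> S"
definition ind_P :: "('s \<Rightarrow> real) \<Rightarrow> nat \<times> 's \<Rightarrow> real" where
  "ind_P P = (\<lambda>(i,s). P s / 2)"
definition ind_C :: "nat \<Rightarrow> ('s \<Rightarrow> 'a set) \<Rightarrow> ('s \<Rightarrow> 'a set) \<Rightarrow> nat \<times> 's \<Rightarrow> 'a set" where
  "ind_C j Cw Cl = (\<lambda>(i,s). if i = j then Cw s else Cl s)"
definition ind_u :: "nat \<Rightarrow> nat \<times> 's \<Rightarrow> real" where
  "ind_u j = (\<lambda>(i,s). if i = j then 1 else 0)"

definition ckddg_error :: "'s set \<Rightarrow> ('s \<Rightarrow> real) \<Rightarrow> ('s \<Rightarrow> 'a set) \<Rightarrow> ('s \<Rightarrow> 'a set)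
    \<Rightarrow> (nat \<Rightarrow> 'a option \<Rightarrow> 'a option \<Rightarrow> real) \<Rightarrow> real" where
  "ckddg_error S P Cw Cl M = ckdg_error (ind_S S) (ind_P P) (ind_C 1 Cw Cl) (ind_C 2 Cw Cl) ind_u M"

definition ckddg_pure :: "'s set \<Rightarrow> ('s \<Rightarrow> 'a set) \<Rightarrow> ('s \<Rightarrow> 'a set) \<Rightarrow> (nat \<Rightarrow> 'a option \<Rightarrow> 'a option \<Rightarrow> real) \<Rightarrow> bool" where
  "ckddg_pure S Cw Cl M = ckdg_pure (ind_S S) (ind_C 1 Cw Cl) (ind_C 2 Cw Cl) M"

definition bayes_pay :: "(nat \<Rightarrow> 'a option \<Rightarrow> 'a option \<Rightarrow> real) \<Rightarrow> nat \<Rightarrow> 'a set \<Rightarrow> 'a set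
    \<Rightarrow> 'a option \<Rightarrow> 'a option \<Rightarrow> real" where
  "bayes_pay M i T1 T2 a1 a2 =
     (let av1 = (a1 \<in> opt T1); av2 = (a2 \<in> opt T2) in
      if av1 \<and> av2 then M i a1 a2
      else if av1 \<and> \<not> av2 then (if i = 1 then 1 else 0)
      else if \<not> av1 \<and> av2 then (if i = 1 then 0 else 1)
      else 1/2)"

definition bayes_util :: "'a set \<Rightarrow> 's set \<Rightarrow> ('s \<Rightarrow> real) \<Rightarrow> ('s \<Rightarrow> 'a set) \<Rightarrow> ('s \<Rightarrow> 'a set)
    \<Rightarrow> (nat \<Rightarrow> 'a option \<Rightarrow> 'a option \<Rightarrow> real) \<Rightarrow> nat
    \<Rightarrow> ('a set \<Rightarrow> 'a option \<Rightarrow> real) \<Rightarrow> ('a set \<Rightarrow> 'a option \<Rightarrow> real) \<Rightarrow> real" where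
  "bayes_util A S P T1 T2 M i s1 s2 = (\<Sum>s\<in>S. P s *
     (\<Sum>a1\<in>opt A. \<Sum>a2\<in>opt A. s1 (T1 s) a1 * s2 (T2 s) a2 * bayes_pay M i (T1 s) (T2 s) a1 a2))"

definition bstrat :: "'a set \<Rightarrow> ('a set \<Rightarrow> 'a option \<Rightarrow> real) \<Rightarrow> bool" where
  "bstrat A sg \<longleftrightarrow> (\<forall>t. mixed (opt A) (sg t))"

definition bayes_v1 :: "'a set \<Rightarrow> 's set \<Rightarrow> ('s \<Rightarrow> real) \<Rightarrow> ('s \<Rightarrow> 'a set) \<Rightarrow> ('s \<Rightarrow> 'a set)
    \<Rightarrow> (nat \<Rightarrow> 'a option \<Rightarrow> 'a option \<Rightarrow> real) \<Rightarrow> real" where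
  "bayes_v1 A S P T1 T2 M = (SUP s1\<in>Collect (bstrat A). INF s2\<in>Collect (bstrat A).
      bayes_util A S P T1 T2 M 1 s1 s2)"

definition bayes_v2 :: "'a set \<Rightarrow> 's set \<Rightarrow> ('s \<Rightarrow> real) \<Rightarrow> ('s \<Rightarrow> 'a set) \<Rightarrow> ('s \<Rightarrow> 'a set)
    \<Rightarrow> (nat \<Rightarrow> 'a option \<Rightarrow> 'a option \<Rightarrow> real) \<Rightarrow> real" where
  "bayes_v2 A S P T1 T2 M = (SUP s2\<in>Collect (bstrat A). INF s1\<in>Collect (bstrat A).
      bayes_util A S P T1 T2 M 2 s1 s2)"

definition pure_strat :: "('a set \<Rightarrow> 'a option) \<Rightarrow> 'a set \<Rightarrow> 'a option \<Rightarrow> real" where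
  "pure_strat f = (\<lambda>t a. if a = f t then 1 else 0)"

definition bayes_pure_eq :: "'a set \<Rightarrow> 's set \<Rightarrow> ('s \<Rightarrow> real) \<Rightarrow> ('s \<Rightarrow> 'a set) \<Rightarrow> ('s \<Rightarrow> 'a set)
    \<Rightarrow> (nat \<Rightarrow> 'a option \<Rightarrow> 'a option \<Rightarrow> real) \<Rightarrow> bool" where
  "bayes_pure_eq A S P T1 T2 M \<longleftrightarrow> (\<exists>f1 f2. (\<forall>t. f1 t \<in> opt A) \<and> (\<forall>t. f2 t \<in> opt A) \<and>
     (\<forall>g1. (\<forall>t. g1 t \<in> opt A) \<longrightarrow>
        bayes_util A S P T1 T2 M 1 (pure_strat g1) (pure_strat f2)
          \<le> bayes_util A S P T1 T2 M 1 (pure_strat f1) (pure_strat f2)) \<and>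
     (\<forall>g2. (\<forall>t. g2 t \<in> opt A) \<longrightarrow>
        bayes_util A S P T1 T2 M 2 (pure_strat f1) (pure_strat g2)
          \<le> bayes_util A S P T1 T2 M 2 (pure_strat f1) (pure_strat f2)))"

text \<open>G1 : agent 1 has type Cw s, agent 2 has type Cl s; G2 swaps the types.\<close>
definition piddg_error :: "'a set \<Rightarrow> 's set \<Rightarrow> ('s \<Rightarrow> real) \<Rightarrow> ('s \<Rightarrow> 'a set) \<Rightarrow> ('s \<Rightarrow> 'a set)
    \<Rightarrow> (nat \<Rightarrow> 'a option \<Rightarrow> 'a option \<Rightarrow> real) \<Rightarrow> real" where
  "piddg_error A S P Cw Cl M = (bayes_v1 A S P Cl Cw M + bayes_v2 A S P Cw Cl M) / 2"

definition piddg_pure :: "'a set \<Rightarrow> 's set \<Rightarrow> ('s \<Rightarrow> real) \<Rightarrow> ('s \<Rightarrow> 'a set) \<Rightarrow> ('s \<Rightarrow> 'a set)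
    \<Rightarrow> (nat \<Rightarrow> 'a option \<Rightarrow> 'a option \<Rightarrow> real) \<Rightarrow> bool" where
  "piddg_pure A S P Cw Cl M \<longleftrightarrow> bayes_pure_eq A S P Cw Cl M \<and> bayes_pure_eq A S P Cl Cw M"

end

theory Submission
  imports Defs
begin

lemma sum_mixed_le:
  assumes "mixed X p" "\<forall>a\<in>X. g a \<le> (c::real)"
  shows "(\<Sum>a\<in>X. p a * g a) \<le> c"
proof -
  have "(\<Sum>a\<in>X. p a * g a) \<le> (\<Sum>a\<in>X. p a * c)"
    using assms by (intro sum_mono mult_left_mono) (auto simp: mixed_def)
  also have "\<dots> = c" using assms by (simp add: mixed_def sum_distrib_right[symmetric])
  finally show ?thesis .
qed

lemma sum_mixed_ge:
  assumes "mixed X p" "\<forall>a\<in>X. (c::real) \<le> g a"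
  shows "c \<le> (\<Sum>a\<in>X. p a * g a)"
proof -
  have "c = (\<Sum>a\<in>X. p a * c)" using assms by (simp add: mixed_def sum_distrib_right[symmetric])
  also have "\<dots> \<le> (\<Sum>a\<in>X. p a * g a)"
    using assms by (intro sum_mono mult_left_mono) (auto simp: mixed_def)
  finally show ?thesis .
qed

lemma mixed_point:
  assumes "finite X" "a \<in> X"
  shows "mixed X (\<lambda>x. if x = a then 1 else 0)"
  using assms unfolding mixed_def by (auto simp: sum.delta)

lemma sum_point:
  assumes "finite X" "a \<in> X"
  shows "(\<Sum>x\<in>X. (if x = a then 1 else 0) * g x) = (g a :: real)"
proof -
  have "(\<Sum>x\<in>X. (if x = a then 1 else 0) * g x) = (\<Sum>x\<in>X. (if x = a then g x else 0))"
    by (rule sum.cong) auto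
  also have "\<dots> = g a" using assms by (simp add: sum.delta)
  finally show ?thesis .
qed

lemma supinf_ge:
  fixes F :: "'x \<Rightarrow> 'y \<Rightarrow> real"
  assumes "x0 \<in> X" "Y \<noteq> {}" "\<forall>x\<in>X. \<forall>y\<in>Y. 0 \<le> F x y \<and> F x y \<le> 1"
    "\<forall>y\<in>Y. c \<le> F x0 y"
  shows "c \<le> (SUP x\<in>X. INF y\<in>Y. F x y)"
proof -
  have bb: "bdd_below (F x ` Y)" if "x \<in> X" for x
    using assms(3) that by (intro bdd_belowI[of _ 0]) auto
  have "c \<le> (INF y\<in>Y. F x0 y)" using assms by (intro cINF_greatest) auto
  also have "\<dots> \<le> (SUP x\<in>X. INF y\<in>Y. F x y)"
  proof (rule cSUP_upper[OF assms(1)])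
    obtain y0 where y0: "y0 \<in> Y" using assms(2) by auto
    show "bdd_above ((\<lambda>x. INF y\<in>Y. F x y) ` X)"
    proof (rule bdd_aboveI[of _ 1])
      fix z assume "z \<in> (\<lambda>x. INF y\<in>Y. F x y) ` X"
      then obtain x where x: "x \<in> X" "z = (INF y\<in>Y. F x y)" by auto
      have "z \<le> F x y0" using x y0 bb[OF x(1)] by (auto intro: cINF_lower)
      also have "\<dots> \<le> 1" using assms(3) x y0 by auto
      finally show "z \<le> 1" .
    qed
  qed
  finally show ?thesis .
qed

lemma supinf_le:
  fixes F :: "'x \<Rightarrow> 'y \<Rightarrow> real"
  assumes "X \<noteq> {}" "\<forall>x\<in>X. \<forall>y\<in>Y. 0 \<le> F x y"
    "\<forall>x\<in>X. \<exists>y\<in>Y. F x y \<le> c"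
  shows "(SUP x\<in>X. INF y\<in>Y. F x y) \<le> c"
proof (rule cSUP_least[OF assms(1)])
  fix x assume x: "x \<in> X"
  then obtain y where y: "y \<in> Y" "F x y \<le> c" using assms(3) by auto
  have bb: "bdd_below (F x ` Y)" using assms(2) x by (intro bdd_belowI[of _ 0]) auto
  have "(INF y\<in>Y. F x y) \<le> F x y" using y bb by (auto intro: cINF_lower)
  then show "(INF y\<in>Y. F x y) \<le> c" using y by linarith
qed

definition mm :: "'x set \<Rightarrow> 'y set \<Rightarrow> ('x \<Rightarrow> 'y \<Rightarrow> real) \<Rightarrow> real" where
  "mm X Y f = (SUP p\<in>Collect (mixed X). INF b\<in>Y. \<Sum>a\<in>X. p a * f a b)"

lemma mm_bnd:
  assumes "\<forall>a\<in>X. \<forall>b\<in>Y. 0 \<le> f a b \<and> f a b \<le> 1"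
  shows "\<forall>p\<in>Collect (mixed X). \<forall>b\<in>Y. 0 \<le> (\<Sum>a\<in>X. p a * f a b) \<and> (\<Sum>a\<in>X. p a * f a b) \<le> 1"
  using assms by (auto intro!: sum_mixed_le sum_mixed_ge)

lemma mm_ge_mixed:
  assumes "finite X" "Y \<noteq> {}" "\<forall>a\<in>X. \<forall>b\<in>Y. 0 \<le> f a b \<and> f a b \<le> 1" "mixed X p"
    "\<forall>b\<in>Y. c \<le> (\<Sum>a\<in>X. p a * f a b)"
  shows "c \<le> mm X Y f"
  unfolding mm_def using assms mm_bnd[OF assms(3)] by (intro supinf_ge[of p]) auto

lemma mm_ge:
  assumes "finite X" "Y \<noteq> {}" "\<forall>a\<in>X. \<forall>b\<in>Y. 0 \<le> f a b \<and> f a b \<le> 1" "r \<in> X"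
    "\<forall>b\<in>Y. c \<le> f r b"
  shows "c \<le> mm X Y f"
  using assms by (intro mm_ge_mixed[OF assms(1-3) mixed_point[OF assms(1,4)]]) (simp add: sum_point)

lemma mm_le:
  assumes "finite X" "X \<noteq> {}" "\<forall>a\<in>X. \<forall>b\<in>Y. 0 \<le> f a b \<and> f a b \<le> 1" "b \<in> Y"
    "\<forall>a\<in>X. f a b \<le> c"
  shows "mm X Y f \<le> c"
  unfolding mm_def
proof (rule supinf_le)
  obtain a where "a \<in> X" using assms(2) by auto
  then show "Collect (mixed X) \<noteq> {}" using mixed_point[OF assms(1)] by auto
  show "\<forall>x\<in>Collect (mixed X). \<forall>y\<in>Y. 0 \<le> (\<Sum>a\<in>X. x a * f a y)"
    using mm_bnd[OF assms(3)] by auto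
  show "\<forall>x\<in>Collect (mixed X). \<exists>y\<in>Y. (\<Sum>a\<in>X. x a * f a y) \<le> c"
    using assms(4,5) by (auto intro!: bexI[of _ b] sum_mixed_le)
qed

lemma mm_cong:
  assumes "\<forall>a\<in>X. \<forall>b\<in>Y. f a b = g a b"
  shows "mm X Y f = mm X Y g"
  unfolding mm_def using assms by (intro SUP_cong INF_cong refl sum.cong) auto

lemma exists_between:
  fixes Lo Up :: "real set"
  assumes "finite Lo" "finite Up" "\<forall>a\<in>Lo. \<forall>b\<in>Up. a < b"
  shows "\<exists>t. (\<forall>a\<in>Lo. a < t) \<and> (\<forall>b\<in>Up. t < b)"
proof (cases "Lo = {}")
  case True
  show ?thesis
  proof (cases "Up = {}")
    case True with \<open>Lo = {}\<close> show ?thesis by auto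
  next
    case False
    then show ?thesis using True assms
      by (intro exI[of _ "Min Up - 1"]) (auto dest: Min_le[OF assms(2)])
  qed
next
  case False
  show ?thesis
  proof (cases "Up = {}")
    case True
    then show ?thesis using False assms
      by (intro exI[of _ "Max Lo + 1"]) (auto dest: Max_ge[OF assms(1)])
  next
    case F2: False
    have lt: "Max Lo < Min Up" using assms False F2 by auto
    have "a < (Max Lo + Min Up) / 2" if "a \<in> Lo" for a
      using Max_ge[OF assms(1) that] lt by (simp add: field_simps)
    moreover have "(Max Lo + Min Up) / 2 < b" if "b \<in> Up" for b
      using Min_le[OF assms(2) that] lt by (simp add: field_simps)
    ultimately show ?thesis by blast
  qed
qed

lemma gordan:
  fixes J :: "'j set"
  assumes "finite J"
  shows "finite R \<Longrightarrow> (\<exists>q. (\<forall>j\<in>J. 0 \<le> q j) \<and> (\<forall>r\<in>R. (\<Sum>j\<in>J. r j * q j) < (0::real)))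
      \<or> (\<exists>p. (\<forall>r\<in>R. 0 \<le> p r) \<and> (\<exists>r\<in>R. 0 < p r) \<and> (\<forall>j\<in>J. 0 \<le> (\<Sum>r\<in>R. p r * r j)))"
  using assms
proof (induction J arbitrary: R rule: finite_induct)
  case empty
  show ?case
  proof (cases "R = {}")
    case True then show ?thesis by auto
  next
    case False then obtain r0 where "r0 \<in> R" by auto
    then show ?thesis by (intro disjI2 exI[of _ "\<lambda>r. if r = r0 then 1 else 0"]) auto
  qed
next
  case (insert k J)
  define Rp where "Rp = {r\<in>R. 0 < r k}"
  define Rn where "Rn = {r\<in>R. r k < 0}"
  define R0 where "R0 = {r\<in>R. r k = 0}"
  define comb where "comb = (\<lambda>(i::'j\<Rightarrow>real, l::'j\<Rightarrow>real). (\<lambda>j. i k * l j - l k * i j))"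
  define R' where "R' = R0 \<union> Rp \<union> comb ` (Rp \<times> Rn)"
  have finR: "finite R" by fact
  have fin: "finite R'" using finR unfolding R'_def Rp_def Rn_def R0_def by auto
  have Rsplit: "r \<in> R0 \<or> r \<in> Rp \<or> r \<in> Rn" if "r \<in> R" for r
    using that unfolding R0_def Rp_def Rn_def by auto
  from insert.IH[OF fin] show ?case
  proof
    assume "\<exists>q. (\<forall>j\<in>J. 0 \<le> q j) \<and> (\<forall>r\<in>R'. (\<Sum>j\<in>J. r j * q j) < 0)"
    then obtain q where q0: "\<forall>j\<in>J. 0 \<le> q j" and qR: "\<forall>r\<in>R'. (\<Sum>j\<in>J. r j * q j) < 0" by blast
    define S where "S r = (\<Sum>j\<in>J. r j * q j)" for r
    have Scomb: "S (comb (i, l)) = i k * S l - l k * S i" for i l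
      unfolding S_def comb_def
      by (simp add: sum_subtractf sum_distrib_left algebra_simps)
    have "\<exists>t. (\<forall>a\<in>insert 0 ((\<lambda>l. S l / (- l k)) ` Rn). a < t) \<and> (\<forall>b\<in>(\<lambda>i. - S i / i k) ` Rp. t < b)"
    proof (rule exists_between)
      show "finite (insert 0 ((\<lambda>l. S l / - l k) ` Rn))" using finR unfolding Rn_def by auto
      show "finite ((\<lambda>i. - S i / i k) ` Rp)" using finR unfolding Rp_def by auto
      show "\<forall>a\<in>insert 0 ((\<lambda>l. S l / - l k) ` Rn). \<forall>b\<in>(\<lambda>i. - S i / i k) ` Rp. a < b"
      proof (intro ballI)
        fix a b assume a: "a \<in> insert 0 ((\<lambda>l. S l / - l k) ` Rn)" and b: "b \<in> (\<lambda>i. - S i / i k) ` Rp"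
        then obtain i where i: "i \<in> Rp" "b = - S i / i k" by auto
        have ik: "0 < i k" using i unfolding Rp_def by auto
        have Si: "S i < 0" using i qR unfolding S_def R'_def by auto
        have bpos: "0 < b" using i ik Si by (simp add: divide_neg_pos)
        show "a < b"
        proof (cases "a = 0")
          case True then show ?thesis using bpos by simp
        next
          case False
          then obtain l where l: "l \<in> Rn" "a = S l / - l k" using a by auto
          have lk: "l k < 0" using l unfolding Rn_def by auto
          have "comb (i, l) \<in> R'" using i l unfolding R'_def by auto
          then have "S (comb (i,l)) < 0" using qR unfolding S_def by auto
          then have *: "i k * S l < l k * S i" using Scomb by simp
          have "S l / - l k < - S i / i k"
            using ik lk * by (simp add: divide_simps) (simp add: algebra_simps)
          then show ?thesis using l i by simp
        qed
      qed
    qed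
    then obtain t where tL: "\<forall>a\<in>insert 0 ((\<lambda>l. S l / (- l k)) ` Rn). a < t"
      and tU: "\<forall>b\<in>(\<lambda>i. - S i / i k) ` Rp. t < b" by blast
    define q' where "q' = q(k := t)"
    have sumq': "(\<Sum>j\<in>insert k J. r j * q' j) = r k * t + S r" for r
    proof -
      have "(\<Sum>j\<in>J. r j * q' j) = S r"
        unfolding S_def q'_def using insert.hyps by (intro sum.cong) auto
      then show ?thesis using insert.hyps by (simp add: q'_def)
    qed
    show ?thesis
    proof (intro disjI1 exI[of _ q'] conjI ballI)
      fix j assume "j \<in> insert k J"
      then show "0 \<le> q' j" using q0 tL by (auto simp: q'_def)
    next
      fix r assume r: "r \<in> R"
      consider "r \<in> R0" | "r \<in> Rp" | "r \<in> Rn" using Rsplit[OF r] by blast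
      then show "(\<Sum>j\<in>insert k J. r j * q' j) < 0"
      proof cases
        case 1
        then have "S r < 0" "r k = 0" using qR unfolding S_def R'_def R0_def by auto
        then show ?thesis by (simp add: sumq')
      next
        case 2
        then have rk: "0 < r k" unfolding Rp_def by auto
        have "t < - S r / r k" using tU 2 by auto
        then have "r k * t < - S r" using rk by (simp add: field_simps)
        then show ?thesis by (simp add: sumq')
      next
        case 3
        then have rk: "r k < 0" unfolding Rn_def by auto
        have "S r / - r k < t" using tL 3 by auto
        then have "S r < - r k * t" using rk by (simp add: field_simps)
        then show ?thesis unfolding sumq' by linarith
      qed
    qed
  next
    assume "\<exists>p. (\<forall>r\<in>R'. 0 \<le> p r) \<and> (\<exists>r\<in>R'. 0 < p r) \<and> (\<forall>j\<in>J. 0 \<le> (\<Sum>r\<in>R'. p r * r j))"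
    then obtain p where p0: "\<forall>r\<in>R'. 0 \<le> p r" and ppos: "\<exists>r\<in>R'. 0 < p r"
      and pJ: "\<forall>j\<in>J. 0 \<le> (\<Sum>r\<in>R'. p r * r j)" by blast
    define pick where "pick g = (SOME il. il \<in> Rp \<times> Rn \<and> g = comb il)" for g
    have pick: "pick g \<in> Rp \<times> Rn \<and> g = comb (pick g)" if "g \<in> comb ` (Rp \<times> Rn)" for g
    proof -
      from that obtain il where "il \<in> Rp \<times> Rn \<and> g = comb il" by auto
      then show ?thesis unfolding pick_def by (rule someI)
    qed
    define cf where "cf g r = (if g \<in> R0 \<union> Rp then (if r = g then 1 else 0)
        else (if r = fst (pick g) then - (snd (pick g)) k else 0) + (if r = snd (pick g) then (fst (pick g)) k else 0))" for g r
    define pp where "pp r = (\<Sum>g\<in>R'. p g * cf g r)" for r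
    have cfnn: "0 \<le> cf g r" if "g \<in> R'" for g r
    proof (cases "g \<in> R0 \<union> Rp")
      case True then show ?thesis by (simp add: cf_def)
    next
      case False
      then have "g \<in> comb ` (Rp \<times> Rn)" using that unfolding R'_def by auto
      from pick[OF this] have "fst (pick g) k > 0" "snd (pick g) k < 0"
        unfolding Rp_def Rn_def by auto
      then show ?thesis using False by (simp add: cf_def)
    qed
    have cfsum: "(\<Sum>r\<in>R. cf g r * r j) = (if g \<in> R0 \<union> Rp then g j else
                  - (snd (pick g)) k * (fst (pick g)) j + (fst (pick g)) k * (snd (pick g)) j)"
      if "g \<in> R'" for g j
    proof (cases "g \<in> R0 \<union> Rp")
      case True
      then have "g \<in> R" unfolding R0_def Rp_def by auto
      have "(\<Sum>r\<in>R. cf g r * r j) = (\<Sum>r\<in>R. (if r = g then g j else 0))"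
        using True by (intro sum.cong) (auto simp: cf_def)
      also have "\<dots> = g j" using \<open>g \<in> R\<close> finR by (simp add: sum.delta)
      finally show ?thesis using True by simp
    next
      case False
      then have "g \<in> comb ` (Rp \<times> Rn)" using that unfolding R'_def by auto
      from pick[OF this] obtain i l where il: "pick g = (i, l)" "i \<in> Rp" "l \<in> Rn" by auto
      then have "i \<in> R" "l \<in> R" "i \<noteq> l" unfolding Rp_def Rn_def by auto
      have "(\<Sum>r\<in>R. cf g r * r j) = (\<Sum>r\<in>R. (if r = i then - l k * i j else 0) + (if r = l then i k * l j else 0))"
        using False il by (intro sum.cong) (auto simp: cf_def)
      also have "\<dots> = - l k * i j + i k * l j"
        using \<open>i \<in> R\<close> \<open>l \<in> R\<close> finR by (simp add: sum.distrib sum.delta)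
      finally show ?thesis using False il by simp
    qed
    have swap: "(\<Sum>r\<in>R. pp r * r j) = (\<Sum>g\<in>R'. p g * (\<Sum>r\<in>R. cf g r * r j))" for j
    proof -
      have "(\<Sum>r\<in>R. pp r * r j) = (\<Sum>r\<in>R. \<Sum>g\<in>R'. p g * (cf g r * r j))"
        unfolding pp_def by (simp add: sum_distrib_right mult.assoc)
      also have "\<dots> = (\<Sum>g\<in>R'. \<Sum>r\<in>R. p g * (cf g r * r j))" by (rule sum.swap)
      also have "\<dots> = (\<Sum>g\<in>R'. p g * (\<Sum>r\<in>R. cf g r * r j))" by (simp add: sum_distrib_left)
      finally show ?thesis .
    qed
    show ?thesis
    proof (intro disjI2 exI[of _ pp] conjI ballI)
      fix r assume "r \<in> R"
      show "0 \<le> pp r" unfolding pp_def using p0 cfnn by (intro sum_nonneg) auto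
    next
      from ppos obtain g0 where g0: "g0 \<in> R'" "0 < p g0" by auto
      define r0 where "r0 = (if g0 \<in> R0 \<union> Rp then g0 else fst (pick g0))"
      have r0: "r0 \<in> R \<and> 0 < cf g0 r0"
      proof (cases "g0 \<in> R0 \<union> Rp")
        case True then show ?thesis unfolding r0_def cf_def R0_def Rp_def by auto
      next
        case False
        then have "g0 \<in> comb ` (Rp \<times> Rn)" using g0 unfolding R'_def by auto
        from pick[OF this] obtain i l where il: "pick g0 = (i, l)" "i \<in> Rp" "l \<in> Rn" by auto
        then have "i \<in> R" "l k < 0" "i \<noteq> l" "0 < i k" unfolding Rp_def Rn_def by auto
        then show ?thesis using False il unfolding r0_def cf_def by auto
      qed
      have "p g0 * cf g0 r0 \<le> pp r0" unfolding pp_def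
        using g0 fin p0 cfnn by (intro member_le_sum[where f = "\<lambda>g. p g * cf g r0"]) auto
      moreover have "0 < p g0 * cf g0 r0" using g0 r0 by simp
      ultimately show "\<exists>r\<in>R. 0 < pp r" using r0 by force
    next
      fix j assume j: "j \<in> insert k J"
      show "0 \<le> (\<Sum>r\<in>R. pp r * r j)"
      proof (cases "j = k")
        case True
        have "0 \<le> (\<Sum>g\<in>R'. p g * (\<Sum>r\<in>R. cf g r * r j))"
        proof (rule sum_nonneg)
          fix g assume g: "g \<in> R'"
          have "0 \<le> p g" using p0 g by auto
          moreover have "0 \<le> (\<Sum>r\<in>R. cf g r * r j)"
          proof (cases "g \<in> R0 \<union> Rp")
            case True then show ?thesis using cfsum[OF g] \<open>j = k\<close> unfolding R0_def Rp_def by auto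
          next
            case False then show ?thesis using cfsum[OF g] \<open>j = k\<close> by simp
          qed
          ultimately show "0 \<le> p g * (\<Sum>r\<in>R. cf g r * r j)" by simp
        qed
        then show ?thesis using swap by simp
      next
        case False
        then have jJ: "j \<in> J" using j by auto
        have "(\<Sum>g\<in>R'. p g * (\<Sum>r\<in>R. cf g r * r j)) = (\<Sum>g\<in>R'. p g * g j)"
        proof (intro sum.cong refl)
          fix g assume g: "g \<in> R'"
          show "p g * (\<Sum>r\<in>R. cf g r * r j) = p g * g j"
          proof (cases "g \<in> R0 \<union> Rp")
            case True then show ?thesis using cfsum[OF g] by simp
          next
            case F: False
            then have "g \<in> comb ` (Rp \<times> Rn)" using g unfolding R'_def by auto
            from pick[OF this] obtain i l where il: "pick g = (i,l)" "g = comb (i,l)"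
              by (cases "pick g") auto
            from il(2) have gj: "g j = i k * l j - l k * i j" by (simp add: comb_def)
            have c: "(\<Sum>r\<in>R. cf g r * r j) = - l k * i j + i k * l j"
              using cfsum[OF g] F il(1) by simp
            have "(\<Sum>r\<in>R. cf g r * r j) = g j" unfolding c gj by (simp add: algebra_simps)
            then show ?thesis by simp
          qed
        qed
        then show ?thesis using swap pJ jJ by simp
      qed
    qed
  qed
qed

lemma minimax:
  fixes f :: "'x \<Rightarrow> 'y \<Rightarrow> real"
  assumes fin: "finite X" "finite Y" and ne: "X \<noteq> {}" "Y \<noteq> {}"
    and bnd: "\<forall>a\<in>X. \<forall>b\<in>Y. 0 \<le> f a b \<and> f a b \<le> 1"
  shows "1 \<le> mm X Y f + mm Y X (\<lambda>b a. 1 - f a b)"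
proof -
  define v where "v = mm X Y f"
  define w where "w = mm Y X (\<lambda>b a. 1 - f a b)"
  have bnd2: "\<forall>b\<in>Y. \<forall>a\<in>X. 0 \<le> 1 - f a b \<and> 1 - f a b \<le> 1" using bnd by auto
  have key: "1 - e \<le> v + w" if e: "0 < e" for e
  proof -
    define t where "t = v + e"
    define rowf where "rowf a = (\<lambda>b. f a b - t)" for a
    have finR: "finite (rowf ` X)" using fin by auto
    from gordan[OF fin(2) finR] show ?thesis
    proof
      assume "\<exists>q. (\<forall>j\<in>Y. 0 \<le> q j) \<and> (\<forall>r\<in>rowf ` X. (\<Sum>j\<in>Y. r j * q j) < 0)"
      then obtain q where q0: "\<forall>j\<in>Y. 0 \<le> q j" and qr: "\<forall>r\<in>rowf ` X. (\<Sum>j\<in>Y. r j * q j) < 0"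
        by blast
      define Q where "Q = (\<Sum>b\<in>Y. q b)"
      have Q0: "0 \<le> Q" unfolding Q_def using q0 by (intro sum_nonneg) auto
      have "Q \<noteq> 0"
      proof
        assume "Q = 0"
        then have "\<forall>b\<in>Y. q b = 0" using sum_nonneg_eq_0_iff[OF fin(2)] q0 unfolding Q_def by auto
        moreover obtain a where "a \<in> X" using ne by auto
        ultimately show False using qr by auto
      qed
      with Q0 have Qp: "0 < Q" by simp
      define qh where "qh b = (if b \<in> Y then q b / Q else 0)" for b
      have mq: "mixed Y qh"
        unfolding mixed_def qh_def using q0 Qp
        by (auto simp: sum_divide_distrib[symmetric] Q_def[symmetric])
      have "\<forall>a\<in>X. 1 - t \<le> (\<Sum>b\<in>Y. qh b * (1 - f a b))"
      proof
        fix a assume a: "a \<in> X"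
        have "(\<Sum>b\<in>Y. (f a b - t) * q b) < 0" using qr a unfolding rowf_def by auto
        moreover have "(\<Sum>b\<in>Y. (f a b - t) * q b) = (\<Sum>b\<in>Y. q b * f a b) - t * Q"
          unfolding Q_def by (simp add: algebra_simps sum_subtractf sum_distrib_left)
        ultimately have lt: "(\<Sum>b\<in>Y. q b * f a b) < t * Q" by simp
        have "(\<Sum>b\<in>Y. qh b * (1 - f a b)) = (\<Sum>b\<in>Y. (q b - q b * f a b) / Q)"
          by (intro sum.cong refl) (simp add: qh_def field_simps)
        also have "\<dots> = (\<Sum>b\<in>Y. q b - q b * f a b) / Q" by (simp add: sum_divide_distrib)
        also have "\<dots> = (Q - (\<Sum>b\<in>Y. q b * f a b)) / Q" by (simp add: sum_subtractf Q_def)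
        also have "\<dots> \<ge> 1 - t"
          using lt Qp by (simp add: field_simps)
        finally show "1 - t \<le> (\<Sum>b\<in>Y. qh b * (1 - f a b))" .
      qed
      then have "1 - t \<le> w" unfolding w_def
        using fin ne bnd2 mq by (intro mm_ge_mixed) auto
      then show ?thesis unfolding t_def by simp
    next
      assume "\<exists>p. (\<forall>r\<in>rowf ` X. 0 \<le> p r) \<and> (\<exists>r\<in>rowf ` X. 0 < p r)
          \<and> (\<forall>j\<in>Y. 0 \<le> (\<Sum>r\<in>rowf ` X. p r * r j))"
      then obtain p where p0: "\<forall>r\<in>rowf ` X. 0 \<le> p r" and ppos: "\<exists>r\<in>rowf ` X. 0 < p r"
        and pY: "\<forall>j\<in>Y. 0 \<le> (\<Sum>r\<in>rowf ` X. p r * r j)" by blast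
      define cnt where "cnt a = card {a'\<in>X. rowf a' = rowf a}" for a
      define ph0 where "ph0 a = (if a \<in> X then p (rowf a) / cnt a else 0)" for a
      have regroup: "(\<Sum>a\<in>X. ph0 a * h (rowf a)) = (\<Sum>r\<in>rowf ` X. p r * h r)" for h :: "('y \<Rightarrow> real) \<Rightarrow> real"
      proof -
        have "(\<Sum>a\<in>X. ph0 a * h (rowf a)) = (\<Sum>r\<in>rowf ` X. \<Sum>a\<in>{a'\<in>X. rowf a' = r}. ph0 a * h (rowf a))"
          by (rule sum.image_gen[OF fin(1)])
        also have "\<dots> = (\<Sum>r\<in>rowf ` X. p r * h r)"
        proof (rule sum.cong[OF refl])
          fix r assume "r \<in> rowf ` X"
          then obtain a0 where a0: "a0 \<in> X" "r = rowf a0" by auto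
          define F where "F = {a'\<in>X. rowf a' = r}"
          have finF: "finite F" using fin(1) unfolding F_def by auto
          have "a0 \<in> F" using a0 unfolding F_def by auto
          then have cF: "0 < card F" using finF by (auto simp: card_gt_0_iff)
          have "(\<Sum>a\<in>F. ph0 a * h (rowf a)) = (\<Sum>a\<in>F. p r / card F * h r)"
            by (intro sum.cong refl) (auto simp: F_def ph0_def cnt_def)
          also have "\<dots> = p r * h r" using cF by simp
          finally show "(\<Sum>a\<in>{a'\<in>X. rowf a' = r}. ph0 a * h (rowf a)) = p r * h r"
            unfolding F_def .
        qed
        finally show ?thesis .
      qed
      define Z where "Z = (\<Sum>a\<in>X. ph0 a)"
      have Zr: "Z = (\<Sum>r\<in>rowf ` X. p r)" using regroup[of "\<lambda>_. 1"] unfolding Z_def by simp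
      have Zp: "0 < Z" unfolding Zr using ppos p0 finR by (auto intro: sum_pos2)
      have ph0nn: "0 \<le> ph0 a" for a
        using p0 unfolding ph0_def cnt_def by auto
      define ph where "ph a = ph0 a / Z" for a
      have sph: "(\<Sum>a\<in>X. ph a) = 1"
      proof -
        have "(\<Sum>a\<in>X. ph a) = (\<Sum>a\<in>X. ph0 a) / Z" unfolding ph_def by (rule sum_divide_distrib[symmetric])
        then show ?thesis using Zp unfolding Z_def by simp
      qed
      have mp: "mixed X ph"
        unfolding mixed_def using ph0nn Zp sph
        by (auto simp: ph_def ph0_def)
      have "\<forall>b\<in>Y. t \<le> (\<Sum>a\<in>X. ph a * f a b)"
      proof
        fix b assume b: "b \<in> Y"
        have "0 \<le> (\<Sum>a\<in>X. ph0 a * rowf a b)" using regroup[of "\<lambda>r. r b"] pY b by simp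
        also have "(\<Sum>a\<in>X. ph0 a * rowf a b) = (\<Sum>a\<in>X. ph0 a * f a b) - t * Z"
          unfolding rowf_def Z_def by (simp add: algebra_simps sum_subtractf sum_distrib_left)
        finally have "t * Z \<le> (\<Sum>a\<in>X. ph0 a * f a b)" by simp
        moreover have "(\<Sum>a\<in>X. ph a * f a b) = (\<Sum>a\<in>X. ph0 a * f a b) / Z"
          unfolding ph_def by (simp add: sum_divide_distrib)
        ultimately show "t \<le> (\<Sum>a\<in>X. ph a * f a b)" using Zp by (simp add: pos_le_divide_eq mult.commute)
      qed
      then have "t \<le> v" unfolding v_def using fin ne bnd mp by (intro mm_ge_mixed) auto
      then show ?thesis using e unfolding t_def by simp
    qed
  qed
  show ?thesis
  proof (rule ccontr)
    assume "\<not> 1 \<le> mm X Y f + mm Y X (\<lambda>b a. 1 - f a b)"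
    then have "v + w < 1" unfolding v_def w_def by simp
    with key[of "(1 - (v + w)) / 2"] show False by (simp add: field_simps)
  qed
qed

definition m0 :: "nat option \<Rightarrow> nat option \<Rightarrow> real" where
  "m0 a b = (case a of None \<Rightarrow> 0 | Some i \<Rightarrow> (case b of None \<Rightarrow> 1 | Some j \<Rightarrow>
     (if i = j then 1/2 else if (i = 1 \<and> j = 3) \<or> (i = 2 \<and> j = 1) \<or> (i = 3 \<and> j = 2) then 1 else 0)))"

definition mp :: "nat option \<Rightarrow> nat option \<Rightarrow> real" where
  "mp a b = (case a of None \<Rightarrow> 0 | Some i \<Rightarrow> (case b of None \<Rightarrow> 1 | Some j \<Rightarrow>
     (if (i = 2 \<and> j = 3) \<or> (i = 3 \<and> j = 1) then 0 else 1)))"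

definition Mz :: "nat \<Rightarrow> nat option \<Rightarrow> nat option \<Rightarrow> real" where
  "Mz i a b = (if i = 1 then m0 a b else 1 - m0 a b)"

definition Mp :: "nat \<Rightarrow> nat option \<Rightarrow> nat option \<Rightarrow> real" where
  "Mp i a b = (if i = 1 then mp a b else 1 - mp a b)"

lemma m0_bnd: "0 \<le> m0 a b \<and> m0 a b \<le> 1"
  by (auto simp: m0_def split: option.splits)

lemma mp_bnd: "0 \<le> mp a b \<and> mp a b \<le> 1"
  by (auto simp: mp_def split: option.splits)

lemma policy_Mz: "policy X Y Mz"
  using m0_bnd unfolding policy_def Mz_def by auto

lemma policy_Mp: "policy X Y Mp"
  using mp_bnd unfolding policy_def Mp_def by auto

lemma opt_mono: "C \<subseteq> A \<Longrightarrow> opt C \<subseteq> opt A"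
  unfolding opt_def by auto

lemma finite_opt: "finite A \<Longrightarrow> finite (opt A)"
  unfolding opt_def by auto

lemma None_opt: "None \<in> opt A" "opt A \<noteq> {}"
  unfolding opt_def by auto

lemma policy_bnd1:
  assumes "policy (opt A) (opt A) M" "C \<subseteq> A" "D \<subseteq> A"
  shows "\<forall>a\<in>opt C. \<forall>b\<in>opt D. 0 \<le> M 1 a b \<and> M 1 a b \<le> 1"
  using assms opt_mono[OF assms(2)] opt_mono[OF assms(3)] unfolding policy_def by blast

lemma policy_bnd2:
  assumes "policy (opt A) (opt A) M" "C \<subseteq> A" "D \<subseteq> A"
  shows "\<forall>b\<in>opt D. \<forall>a\<in>opt C. 0 \<le> M 2 a b \<and> M 2 a b \<le> 1"
  using assms opt_mono[OF assms(2)] opt_mono[OF assms(3)] unfolding policy_def by blast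

lemma policy_sum:
  assumes "policy (opt A) (opt A) M" "a \<in> opt A" "b \<in> opt A"
  shows "M 2 a b = 1 - M 1 a b"
proof -
  have "M 1 a b + M 2 a b = 1" using assms unfolding policy_def by blast
  then show ?thesis by simp
qed

abbreviation AA :: "nat set" where "AA \<equiv> {1,2,3}"

definition W1 :: "nat \<Rightarrow> (nat \<Rightarrow> nat option \<Rightarrow> nat option \<Rightarrow> real) \<Rightarrow> real" where
  "W1 k M = mm (opt {k}) (opt (AA - {k})) (M 1)"

definition W2 :: "nat \<Rightarrow> (nat \<Rightarrow> nat option \<Rightarrow> nat option \<Rightarrow> real) \<Rightarrow> real" where
  "W2 k M = mm (opt {k}) (opt (AA - {k})) (\<lambda>b a. M 2 a b)"

lemma W_nonneg:
  assumes "policy (opt AA) (opt AA) M" "k \<in> AA"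
  shows "0 \<le> W1 k M" "0 \<le> W2 k M"
proof -
  have s: "{k} \<subseteq> AA" "AA - {k} \<subseteq> AA" using assms(2) by auto
  show "0 \<le> W1 k M" unfolding W1_def
    by (rule mm_ge[where r = None]) (use policy_bnd1[OF assms(1) s] None_opt in \<open>auto simp: finite_opt\<close>)
  show "0 \<le> W2 k M" unfolding W2_def
    by (rule mm_ge[where r = None]) (use policy_bnd2[OF assms(1) s(2) s(1)] None_opt in \<open>auto simp: finite_opt\<close>)
qed

lemma W1_ge:
  assumes "policy (opt AA) (opt AA) M" "k \<in> AA" "a \<in> opt {k}"
    "\<forall>b'\<in>opt AA. M 2 a b' \<le> M 2 a b" "b \<in> opt AA"
  shows "M 1 a b \<le> W1 k M"
proof -
  have s: "{k} \<subseteq> AA" "AA - {k} \<subseteq> AA" using assms(2) by auto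
  have aA: "a \<in> opt AA" using opt_mono[OF s(1)] assms(3) by auto
  show ?thesis unfolding W1_def
  proof (rule mm_ge[where r = a])
    show "\<forall>b'\<in>opt (AA - {k}). M 1 a b \<le> M 1 a b'"
    proof
      fix b' assume "b' \<in> opt (AA - {k})"
      then have b': "b' \<in> opt AA" using opt_mono[OF s(2)] by auto
      show "M 1 a b \<le> M 1 a b'" using assms(4) b' policy_sum[OF assms(1) aA b'] policy_sum[OF assms(1) aA assms(5)]
        by auto
    qed
  qed (use policy_bnd1[OF assms(1) s] None_opt assms(3) in \<open>auto simp: finite_opt\<close>)
qed

lemma W2_ge:
  assumes "policy (opt AA) (opt AA) M" "k \<in> AA" "b \<in> opt {k}"
    "\<forall>a'\<in>opt AA. M 1 a' b \<le> M 1 a b" "a \<in> opt AA"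
  shows "M 2 a b \<le> W2 k M"
proof -
  have s: "{k} \<subseteq> AA" "AA - {k} \<subseteq> AA" using assms(2) by auto
  have bA: "b \<in> opt AA" using opt_mono[OF s(1)] assms(3) by auto
  show ?thesis unfolding W2_def
  proof (rule mm_ge[where r = b])
    show "\<forall>a'\<in>opt (AA - {k}). M 2 a b \<le> M 2 a' b"
    proof
      fix a' assume "a' \<in> opt (AA - {k})"
      then have a': "a' \<in> opt AA" using opt_mono[OF s(2)] by auto
      show "M 2 a b \<le> M 2 a' b" using assms(4) a' policy_sum[OF assms(1) a' bA] policy_sum[OF assms(1) assms(5) bA]
        by auto
    qed
  qed (use policy_bnd2[OF assms(1) s(2) s(1)] None_opt assms(3) in \<open>auto simp: finite_opt\<close>)
qed

lemma opt_AA: "opt AA = {None, Some 1, Some 2, Some 3}"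
  unfolding opt_def by auto

lemma cover: "x \<in> opt AA \<Longrightarrow> \<exists>k\<in>AA. x \<in> opt {k}"
  unfolding opt_def by auto

lemma key_lower:
  assumes "policy (opt AA) (opt AA) M" "a \<in> opt AA" "b \<in> opt AA"
    "\<forall>a'\<in>opt AA. M 1 a' b \<le> M 1 a b" "\<forall>b'\<in>opt AA. M 2 a b' \<le> M 2 a b"
  shows "1 \<le> W1 1 M + W1 2 M + W1 3 M + W2 1 M + W2 2 M + W2 3 M"
proof -
  obtain k where k: "k \<in> AA" "a \<in> opt {k}" using cover[OF assms(2)] by blast
  obtain k' where k': "k' \<in> AA" "b \<in> opt {k'}" using cover[OF assms(3)] by blast
  have g1: "M 1 a b \<le> W1 k M" using W1_ge[OF assms(1) k assms(5,3)] .
  have g2: "M 2 a b \<le> W2 k' M" using W2_ge[OF assms(1) k' assms(4,2)] .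
  have s: "M 2 a b = 1 - M 1 a b" using policy_sum[OF assms(1-3)] .
  have nn: "0 \<le> W1 1 M" "0 \<le> W1 2 M" "0 \<le> W1 3 M" "0 \<le> W2 1 M" "0 \<le> W2 2 M" "0 \<le> W2 3 M"
    using W_nonneg[OF assms(1)] by auto
  show ?thesis using k(1) k'(1) g1 g2 s nn by auto
qed

lemma W1_le:
  assumes "policy (opt AA) (opt AA) M" "k \<in> AA" "b \<in> opt (AA - {k})" "\<forall>a\<in>opt {k}. M 1 a b \<le> c"
  shows "W1 k M \<le> c"
proof -
  have s: "{k} \<subseteq> AA" "AA - {k} \<subseteq> AA" using assms(2) by auto
  show ?thesis unfolding W1_def
    by (rule mm_le[where b = b]) (use policy_bnd1[OF assms(1) s] None_opt assms(3,4) in \<open>auto simp: finite_opt\<close>)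
qed

lemma W2_le:
  assumes "policy (opt AA) (opt AA) M" "k \<in> AA" "a \<in> opt (AA - {k})" "\<forall>b\<in>opt {k}. M 2 a b \<le> c"
  shows "W2 k M \<le> c"
proof -
  have s: "{k} \<subseteq> AA" "AA - {k} \<subseteq> AA" using assms(2) by auto
  show ?thesis unfolding W2_def
    by (rule mm_le[where f = "\<lambda>b a. M 2 a b" and b = a])
      (use policy_bnd2[OF assms(1) s(2) s(1)] None_opt assms(3,4) in \<open>auto simp: finite_opt\<close>)
qed

lemma Wz: "W1 1 Mz \<le> 0" "W1 2 Mz \<le> 0" "W1 3 Mz \<le> 0" "W2 1 Mz \<le> 0" "W2 2 Mz \<le> 0" "W2 3 Mz \<le> 0"
  apply (rule W1_le[OF policy_Mz, where b = "Some 2"]; simp add: opt_def Mz_def m0_def)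
  apply (rule W1_le[OF policy_Mz, where b = "Some 3"]; simp add: opt_def Mz_def m0_def)
  apply (rule W1_le[OF policy_Mz, where b = "Some 1"]; simp add: opt_def Mz_def m0_def)
  apply (rule W2_le[OF policy_Mz, where a = "Some 2"]; simp add: opt_def Mz_def m0_def)
  apply (rule W2_le[OF policy_Mz, where a = "Some 3"]; simp add: opt_def Mz_def m0_def)
  apply (rule W2_le[OF policy_Mz, where a = "Some 1"]; simp add: opt_def Mz_def m0_def)
  done

lemma Wp: "W1 1 Mp \<le> 1" "W1 2 Mp \<le> 0" "W1 3 Mp \<le> 0" "W2 1 Mp \<le> 0" "W2 2 Mp \<le> 0" "W2 3 Mp \<le> 0"
  apply (rule W1_le[OF policy_Mp, where b = "Some 2"]; simp add: opt_def Mp_def mp_def)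
  apply (rule W1_le[OF policy_Mp, where b = "Some 3"]; simp add: opt_def Mp_def mp_def)
  apply (rule W1_le[OF policy_Mp, where b = "Some 1"]; simp add: opt_def Mp_def mp_def)
  apply (rule W2_le[OF policy_Mp, where a = "Some 2"]; simp add: opt_def Mp_def mp_def)
  apply (rule W2_le[OF policy_Mp, where a = "Some 1"]; simp add: opt_def Mp_def mp_def)
  apply (rule W2_le[OF policy_Mp, where a = "Some 1"]; simp add: opt_def Mp_def mp_def)
  done

lemma pe_row:
  assumes "a \<in> opt (C1 s)" "\<forall>b\<in>opt (C2 s). mp a b = 1"
  shows "ckdg_pure_eq_at C1 C2 Mp s"
  unfolding ckdg_pure_eq_at_def
  using assms None_opt mp_bnd by (intro bexI[of _ a] bexI[of _ None]) (auto simp: Mp_def)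

lemma pe_col:
  assumes "b \<in> opt (C2 s)" "\<forall>a\<in>opt (C1 s). mp a b = 0"
  shows "ckdg_pure_eq_at C1 C2 Mp s"
  unfolding ckdg_pure_eq_at_def
  using assms None_opt mp_bnd by (intro bexI[of _ None] bexI[of _ b]) (auto simp: Mp_def)

lemma gap_intro:
  assumes "Pol Ma" "\<And>M. Pol M \<Longrightarrow> ea \<le> E M" "E Ma \<le> ea"
    "Pol Mb" "Pure Mb" "E Mb \<le> eb" "\<And>M. Pol M \<Longrightarrow> Pure M \<Longrightarrow> eb \<le> E M" "ea < eb"
  shows "strict_min_gap Pol Pure E"
proof -
  have h1: "\<forall>M. Pol M \<longrightarrow> E Ma \<le> E M" using assms(2,3) by (meson order.trans)
  have h2: "\<forall>M. Pol M \<and> Pure M \<longrightarrow> E Mb \<le> E M" using assms(6,7) by (meson order.trans)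
  have h3: "E Ma < E Mb" using assms(2)[OF assms(1)] assms(3) assms(7)[OF assms(4,5)] assms(8) by linarith
  show ?thesis unfolding strict_min_gap_def using assms(1,4,5) h1 h2 h3 by blast
qed

lemma ckdg_w1_mm: "ckdg_w1 C1 C2 M s = mm (opt (C1 s)) (opt (C2 s)) (M 1)"
  by (simp add: ckdg_w1_def mm_def)

lemma ckdg_w2_mm: "ckdg_w2 C1 C2 M s = mm (opt (C2 s)) (opt (C1 s)) (\<lambda>b a. M 2 a b)"
  by (simp add: ckdg_w2_def mm_def)

definition C1k :: "nat \<Rightarrow> nat set" where
  "C1k s = (if s = 0 then AA else if s \<le> 3 then AA - {s} else {s - 3})"
definition C2k :: "nat \<Rightarrow> nat set" where
  "C2k s = (if s = 0 then AA else if s \<le> 3 then {s} else AA - {s - 3})"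
definition uk :: "nat \<Rightarrow> nat \<Rightarrow> real" where
  "uk i s = (if s = 0 then 0 else if (s \<le> 3) = (i = 1) then 1 else 0)"
definition Pk :: "nat \<Rightarrow> real" where
  "Pk s = (if s = 0 then 0 else 1/6)"
definition Sk :: "nat set" where "Sk = {0,1,2,3,4,5,6}"

lemma err_k: "ckdg_error Sk Pk C1k C2k uk M = (W1 1 M + W1 2 M + W1 3 M + W2 1 M + W2 2 M + W2 3 M) / 6"
  unfolding ckdg_error_def ckdg_w1_mm ckdg_w2_mm W1_def W2_def Sk_def
  by (simp add: C1k_def C2k_def uk_def Pk_def)

lemma ckdg_k: "ckdg AA AA Sk Pk C1k C2k uk"
  unfolding ckdg_def pmf_on_def Sk_def by (auto simp: Pk_def C1k_def C2k_def)

lemma part1: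
  "\<exists>(A1::nat set) (A2::nat set) (S::nat set) P C1 C2 u.
            ckdg A1 A2 S P C1 C2 u \<and>
            strict_min_gap (policy (opt A1) (opt A2)) (ckdg_pure S C1 C2) (ckdg_error S P C1 C2 u)"
proof (intro exI conjI)
  show "ckdg AA AA Sk Pk C1k C2k uk" by (rule ckdg_k)
  show "strict_min_gap (policy (opt AA) (opt AA)) (ckdg_pure Sk C1k C2k) (ckdg_error Sk Pk C1k C2k uk)"
  proof (rule gap_intro[where Ma = Mz and Mb = Mp and ea = 0 and eb = "1/6"])
    show "policy (opt AA) (opt AA) Mz" "policy (opt AA) (opt AA) Mp" by (rule policy_Mz policy_Mp)+
    show "0 \<le> ckdg_error Sk Pk C1k C2k uk M" if "policy (opt AA) (opt AA) M" for M
      unfolding err_k using W_nonneg[OF that] by (simp add: add_nonneg_nonneg)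
    show "ckdg_error Sk Pk C1k C2k uk Mz \<le> 0" unfolding err_k using Wz by simp
    show "ckdg_error Sk Pk C1k C2k uk Mp \<le> 1/6" unfolding err_k using Wp by simp
    show "(0::real) < 1/6" by simp
    show "ckdg_pure Sk C1k C2k Mp"
      unfolding ckdg_pure_def
    proof
      fix s assume "s \<in> Sk"
      then show "ckdg_pure_eq_at C1k C2k Mp s"
        unfolding Sk_def
        apply (elim insertE)
               apply (rule pe_row[where a = "Some 1"]; simp add: C1k_def C2k_def opt_def mp_def)
              apply (rule pe_row[where a = "Some 2"]; simp add: C1k_def C2k_def opt_def mp_def)
             apply (rule pe_row[where a = "Some 1"]; simp add: C1k_def C2k_def opt_def mp_def)
            apply (rule pe_row[where a = "Some 1"]; simp add: C1k_def C2k_def opt_def mp_def)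
           apply (rule pe_row[where a = "Some 1"]; simp add: C1k_def C2k_def opt_def mp_def)
          apply (rule pe_col[where b = "Some 3"]; simp add: C1k_def C2k_def opt_def mp_def)
         apply (rule pe_col[where b = "Some 1"]; simp add: C1k_def C2k_def opt_def mp_def)
        apply simp
        done
    qed
    show "1/6 \<le> ckdg_error Sk Pk C1k C2k uk M"
      if "policy (opt AA) (opt AA) M" "ckdg_pure Sk C1k C2k M" for M
    proof -
      have "ckdg_pure_eq_at C1k C2k M 0" using that(2) unfolding ckdg_pure_def Sk_def by auto
      then obtain a b where ab: "a \<in> opt AA" "b \<in> opt AA" "\<forall>a'\<in>opt AA. M 1 a' b \<le> M 1 a b"
        "\<forall>b'\<in>opt AA. M 2 a b' \<le> M 2 a b"
        unfolding ckdg_pure_eq_at_def C1k_def C2k_def by auto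
      show ?thesis unfolding err_k using key_lower[OF that(1) ab] by simp
    qed
  qed
qed

definition Sd :: "nat set" where "Sd = {0,1,2,3}"
definition Pd :: "nat \<Rightarrow> real" where "Pd s = (if s = 0 then 0 else 1/3)"
definition Cw :: "nat \<Rightarrow> nat set" where "Cw s = (if s = 0 then AA else AA - {s})"
definition Cl :: "nat \<Rightarrow> nat set" where "Cl s = (if s = 0 then AA else {s})"

lemma prodSd: "ind_S Sd = {(1,0),(1,1),(1,2),(1,3),(2,0),(2,1),(2,2),(2,3)}"
  unfolding ind_S_def Sd_def by auto

lemma err_d: "ckddg_error Sd Pd Cw Cl M = (W1 1 M + W1 2 M + W1 3 M + W2 1 M + W2 2 M + W2 3 M) / 6"
  unfolding ckddg_error_def ckdg_error_def prodSd ckdg_w1_mm ckdg_w2_mm W1_def W2_def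
  by (simp add: ind_P_def ind_C_def ind_u_def Cw_def Cl_def Pd_def)

lemma ckddg_d: "ckddg AA Sd Pd Cw Cl"
  unfolding ckddg_def pmf_on_def Sd_def by (auto simp: Pd_def Cw_def Cl_def)

lemma part2:
  "\<exists>(A::nat set) (S::nat set) P Cw Cl.
            ckddg A S P Cw Cl \<and>
            strict_min_gap (policy (opt A) (opt A)) (ckddg_pure S Cw Cl) (ckddg_error S P Cw Cl)"
proof (intro exI conjI)
  show "ckddg AA Sd Pd Cw Cl" by (rule ckddg_d)
  show "strict_min_gap (policy (opt AA) (opt AA)) (ckddg_pure Sd Cw Cl) (ckddg_error Sd Pd Cw Cl)"
  proof (rule gap_intro[where Ma = Mz and Mb = Mp and ea = 0 and eb = "1/6"])
    show "policy (opt AA) (opt AA) Mz" "policy (opt AA) (opt AA) Mp" by (rule policy_Mz policy_Mp)+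
    show "0 \<le> ckddg_error Sd Pd Cw Cl M" if "policy (opt AA) (opt AA) M" for M
      unfolding err_d using W_nonneg[OF that] by (simp add: add_nonneg_nonneg)
    show "ckddg_error Sd Pd Cw Cl Mz \<le> 0" unfolding err_d using Wz by simp
    show "ckddg_error Sd Pd Cw Cl Mp \<le> 1/6" unfolding err_d using Wp by simp
    show "(0::real) < 1/6" by simp
    show "ckddg_pure Sd Cw Cl Mp"
      unfolding ckddg_pure_def ckdg_pure_def prodSd
      apply (simp only: ball_simps)
      apply (intro conjI)
             apply (rule pe_row[where a = "Some 1"]; simp add: ind_C_def Cw_def Cl_def opt_def mp_def)
            apply (rule pe_row[where a = "Some 2"]; simp add: ind_C_def Cw_def Cl_def opt_def mp_def)
           apply (rule pe_row[where a = "Some 1"]; simp add: ind_C_def Cw_def Cl_def opt_def mp_def)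
          apply (rule pe_row[where a = "Some 1"]; simp add: ind_C_def Cw_def Cl_def opt_def mp_def)
         apply (rule pe_row[where a = "Some 1"]; simp add: ind_C_def Cw_def Cl_def opt_def mp_def)
        apply (rule pe_row[where a = "Some 1"]; simp add: ind_C_def Cw_def Cl_def opt_def mp_def)
       apply (rule pe_col[where b = "Some 3"]; simp add: ind_C_def Cw_def Cl_def opt_def mp_def)
      apply (rule pe_col[where b = "Some 1"]; simp add: ind_C_def Cw_def Cl_def opt_def mp_def)
      apply simp
      done
    show "1/6 \<le> ckddg_error Sd Pd Cw Cl M"
      if "policy (opt AA) (opt AA) M" "ckddg_pure Sd Cw Cl M" for M
    proof -
      have "ckdg_pure_eq_at (ind_C 1 Cw Cl) (ind_C 2 Cw Cl) M (1,0)"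
        using that(2) unfolding ckddg_pure_def ckdg_pure_def prodSd by auto
      then obtain a b where ab: "a \<in> opt AA" "b \<in> opt AA" "\<forall>a'\<in>opt AA. M 1 a' b \<le> M 1 a b"
        "\<forall>b'\<in>opt AA. M 2 a b' \<le> M 2 a b"
        unfolding ckdg_pure_eq_at_def ind_C_def Cw_def Cl_def by auto
      show ?thesis unfolding err_d using key_lower[OF that(1) ab] by simp
    qed
  qed
qed

lemma pay_bnd:
  assumes "policy (opt A) (opt A) M" "a1 \<in> opt A" "a2 \<in> opt A" "i \<in> {1,2}"
  shows "0 \<le> bayes_pay M i T1 T2 a1 a2 \<and> bayes_pay M i T1 T2 a1 a2 \<le> 1"
  using assms unfolding bayes_pay_def policy_def Let_def by auto

lemma inner_swap1:
  "(\<Sum>a1\<in>X. \<Sum>a2\<in>X. x a1 * y a2 * p a1 a2) = (\<Sum>a2\<in>X. y a2 * (\<Sum>a1\<in>X. x a1 * (p a1 a2::real)))"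
  by (subst sum.swap) (simp add: sum_distrib_left algebra_simps)

lemma inner_swap2:
  "(\<Sum>a1\<in>X. \<Sum>a2\<in>X. x a1 * y a2 * p a1 a2) = (\<Sum>a1\<in>X. x a1 * (\<Sum>a2\<in>X. y a2 * (p a1 a2::real)))"
  by (simp add: sum_distrib_left algebra_simps)

lemma inner_ge1:
  assumes "mixed X y" "\<forall>a2\<in>X. c \<le> (\<Sum>a1\<in>X. x a1 * p a1 a2)"
  shows "c \<le> (\<Sum>a1\<in>X. \<Sum>a2\<in>X. x a1 * y a2 * (p a1 a2::real))"
  unfolding inner_swap1 using assms by (intro sum_mixed_ge) auto

lemma inner_ge2:
  assumes "mixed X x" "\<forall>a1\<in>X. c \<le> (\<Sum>a2\<in>X. y a2 * p a1 a2)"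
  shows "c \<le> (\<Sum>a1\<in>X. \<Sum>a2\<in>X. x a1 * y a2 * (p a1 a2::real))"
  unfolding inner_swap2 using assms by (intro sum_mixed_ge) auto

lemma inner_le1:
  assumes "mixed X y" "\<forall>a2\<in>X. (\<Sum>a1\<in>X. x a1 * p a1 a2) \<le> c"
  shows "(\<Sum>a1\<in>X. \<Sum>a2\<in>X. x a1 * y a2 * (p a1 a2::real)) \<le> c"
  unfolding inner_swap1 using assms by (intro sum_mixed_le) auto

lemma inner_le2:
  assumes "mixed X x" "\<forall>a1\<in>X. (\<Sum>a2\<in>X. y a2 * p a1 a2) \<le> c"
  shows "(\<Sum>a1\<in>X. \<Sum>a2\<in>X. x a1 * y a2 * (p a1 a2::real)) \<le> c"
  unfolding inner_swap2 using assms by (intro sum_mixed_le) auto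

lemma inner_bnd:
  assumes "mixed X x" "mixed X y" "\<forall>a1\<in>X. \<forall>a2\<in>X. 0 \<le> p a1 a2 \<and> p a1 a2 \<le> (1::real)"
  shows "0 \<le> (\<Sum>a1\<in>X. \<Sum>a2\<in>X. x a1 * y a2 * p a1 a2) \<and> (\<Sum>a1\<in>X. \<Sum>a2\<in>X. x a1 * y a2 * p a1 a2) \<le> 1"
  using assms by (auto intro!: inner_ge1 inner_le1 sum_mixed_ge sum_mixed_le)

lemma util_ge:
  assumes "\<forall>s\<in>S. 0 \<le> P s"
    "\<forall>s\<in>S. c s \<le> (\<Sum>a1\<in>opt A. \<Sum>a2\<in>opt A. s1 (T1 s) a1 * s2 (T2 s) a2 * bayes_pay M i (T1 s) (T2 s) a1 a2)"
  shows "(\<Sum>s\<in>S. P s * c s) \<le> bayes_util A S P T1 T2 M i s1 s2"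
  unfolding bayes_util_def using assms by (intro sum_mono mult_left_mono) auto

lemma util_le:
  assumes "\<forall>s\<in>S. 0 \<le> P s"
    "\<forall>s\<in>S. (\<Sum>a1\<in>opt A. \<Sum>a2\<in>opt A. s1 (T1 s) a1 * s2 (T2 s) a2 * bayes_pay M i (T1 s) (T2 s) a1 a2) \<le> c s"
  shows "bayes_util A S P T1 T2 M i s1 s2 \<le> (\<Sum>s\<in>S. P s * c s)"
  unfolding bayes_util_def using assms by (intro sum_mono mult_left_mono) auto

lemma util_bnd:
  assumes "pmf_on S P" "policy (opt A) (opt A) M" "i \<in> {1,2}" "bstrat A s1" "bstrat A s2"
  shows "0 \<le> bayes_util A S P T1 T2 M i s1 s2 \<and> bayes_util A S P T1 T2 M i s1 s2 \<le> 1"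
proof -
  have inn: "0 \<le> (\<Sum>a1\<in>opt A. \<Sum>a2\<in>opt A. s1 (T1 s) a1 * s2 (T2 s) a2 * bayes_pay M i (T1 s) (T2 s) a1 a2)
     \<and> (\<Sum>a1\<in>opt A. \<Sum>a2\<in>opt A. s1 (T1 s) a1 * s2 (T2 s) a2 * bayes_pay M i (T1 s) (T2 s) a1 a2) \<le> 1" for s
    using assms(4,5) pay_bnd[OF assms(2) _ _ assms(3)] unfolding bstrat_def by (intro inner_bnd) auto
  have "(\<Sum>s\<in>S. P s * 0) \<le> bayes_util A S P T1 T2 M i s1 s2"
    using assms(1) inn unfolding pmf_on_def by (intro util_ge) auto
  moreover have "bayes_util A S P T1 T2 M i s1 s2 \<le> (\<Sum>s\<in>S. P s * 1)"
    using assms(1) inn unfolding pmf_on_def by (intro util_le) auto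
  ultimately show ?thesis using assms(1) unfolding pmf_on_def by simp
qed

lemma bstrat_ne:
  assumes "finite A" shows "Collect (bstrat A) \<noteq> {}"
proof -
  have "bstrat A (\<lambda>t x. if x = None then 1 else 0)"
    unfolding bstrat_def using mixed_point[OF finite_opt[OF assms] None_opt(1)] by simp
  then show ?thesis by blast
qed

lemma v1_ge:
  assumes "finite A" "pmf_on S P" "policy (opt A) (opt A) M" "bstrat A sx"
    "\<forall>sy. bstrat A sy \<longrightarrow> c \<le> bayes_util A S P T1 T2 M 1 sx sy"
  shows "c \<le> bayes_v1 A S P T1 T2 M"
  unfolding bayes_v1_def
  using assms util_bnd[OF assms(2,3)] bstrat_ne[OF assms(1)] by (intro supinf_ge) auto

lemma v1_le:
  assumes "finite A" "pmf_on S P" "policy (opt A) (opt A) M"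
    "\<forall>s1. bstrat A s1 \<longrightarrow> (\<exists>s2. bstrat A s2 \<and> bayes_util A S P T1 T2 M 1 s1 s2 \<le> c)"
  shows "bayes_v1 A S P T1 T2 M \<le> c"
  unfolding bayes_v1_def
  using assms util_bnd[OF assms(2,3)] bstrat_ne[OF assms(1)] by (intro supinf_le) auto

lemma v2_ge:
  assumes "finite A" "pmf_on S P" "policy (opt A) (opt A) M" "bstrat A sy"
    "\<forall>sx. bstrat A sx \<longrightarrow> c \<le> bayes_util A S P T1 T2 M 2 sx sy"
  shows "c \<le> bayes_v2 A S P T1 T2 M"
  unfolding bayes_v2_def
  using assms util_bnd[OF assms(2,3)] bstrat_ne[OF assms(1)] by (intro supinf_ge) auto

lemma v2_le:
  assumes "finite A" "pmf_on S P" "policy (opt A) (opt A) M"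
    "\<forall>s2. bstrat A s2 \<longrightarrow> (\<exists>s1. bstrat A s1 \<and> bayes_util A S P T1 T2 M 2 s1 s2 \<le> c)"
  shows "bayes_v2 A S P T1 T2 M \<le> c"
  unfolding bayes_v2_def
  using assms util_bnd[OF assms(2,3)] bstrat_ne[OF assms(1)] by (intro supinf_le) auto

lemma util_pure:
  assumes "finite A" "\<forall>t. f1 t \<in> opt A" "\<forall>t. f2 t \<in> opt A"
  shows "bayes_util A S P T1 T2 M i (pure_strat f1) (pure_strat f2)
     = (\<Sum>s\<in>S. P s * bayes_pay M i (T1 s) (T2 s) (f1 (T1 s)) (f2 (T2 s)))"
proof -
  have inner: "(\<Sum>a1\<in>opt A. \<Sum>a2\<in>opt A. pure_strat f1 t1 a1 * pure_strat f2 t2 a2 * bayes_pay M i t1 t2 a1 a2)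
      = bayes_pay M i t1 t2 (f1 t1) (f2 t2)" for t1 t2
  proof -
    have "(\<Sum>a1\<in>opt A. \<Sum>a2\<in>opt A. pure_strat f1 t1 a1 * pure_strat f2 t2 a2 * bayes_pay M i t1 t2 a1 a2)
      = (\<Sum>a1\<in>opt A. (if a1 = f1 t1 then 1 else 0) * (\<Sum>a2\<in>opt A. (if a2 = f2 t2 then 1 else 0) * bayes_pay M i t1 t2 a1 a2))"
      unfolding inner_swap2 pure_strat_def by simp
    also have "\<dots> = bayes_pay M i t1 t2 (f1 t1) (f2 t2)"
      using assms by (simp add: sum_point finite_opt)
    finally show ?thesis .
  qed
  show ?thesis unfolding bayes_util_def inner ..
qed

lemma bstrat_pure: "\<forall>t. f t \<in> opt A \<Longrightarrow> finite A \<Longrightarrow> bstrat A (pure_strat f)"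
  unfolding bstrat_def pure_strat_def using mixed_point finite_opt by metis

lemma pure_eq_termwise:
  fixes A :: "'a set" and fa fb :: "'a set \<Rightarrow> 'a option"
  assumes "finite A" "\<forall>s\<in>S. 0 \<le> P s" "\<forall>t. fa t \<in> opt A" "\<forall>t. fb t \<in> opt A"
    "\<forall>s\<in>S. \<forall>a\<in>opt A. bayes_pay M 1 (T1 s) (T2 s) a (fb (T2 s)) \<le> bayes_pay M 1 (T1 s) (T2 s) (fa (T1 s)) (fb (T2 s))"
    "\<forall>s\<in>S. \<forall>a\<in>opt A. bayes_pay M 2 (T1 s) (T2 s) (fa (T1 s)) a \<le> bayes_pay M 2 (T1 s) (T2 s) (fa (T1 s)) (fb (T2 s))"
  shows "bayes_pure_eq A S P T1 T2 M"
  unfolding bayes_pure_eq_def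
proof (rule exI[of _ fa], rule exI[of _ fb], intro conjI)
  show "\<forall>t. fa t \<in> opt A" by fact
  show "\<forall>t. fb t \<in> opt A" by fact
next
  show "\<forall>g1::'a set \<Rightarrow> 'a option. (\<forall>t. g1 t \<in> opt A) \<longrightarrow> bayes_util A S P T1 T2 M 1 (pure_strat g1) (pure_strat fb) \<le> bayes_util A S P T1 T2 M 1 (pure_strat fa) (pure_strat fb)"
  proof (intro allI impI)
  fix g1 :: "'a set \<Rightarrow> 'a option" assume g1: "\<forall>t. g1 t \<in> opt A"
  show "bayes_util A S P T1 T2 M 1 (pure_strat g1) (pure_strat fb) \<le> bayes_util A S P T1 T2 M 1 (pure_strat fa) (pure_strat fb)"
    unfolding util_pure[OF assms(1) g1 assms(4)] util_pure[OF assms(1) assms(3,4)]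
    using assms g1 by (intro sum_mono mult_left_mono) auto
  qed
next
  show "\<forall>g2::'a set \<Rightarrow> 'a option. (\<forall>t. g2 t \<in> opt A) \<longrightarrow> bayes_util A S P T1 T2 M 2 (pure_strat fa) (pure_strat g2) \<le> bayes_util A S P T1 T2 M 2 (pure_strat fa) (pure_strat fb)"
  proof (intro allI impI)
  fix g2 :: "'a set \<Rightarrow> 'a option" assume g2: "\<forall>t. g2 t \<in> opt A"
  show "bayes_util A S P T1 T2 M 2 (pure_strat fa) (pure_strat g2) \<le> bayes_util A S P T1 T2 M 2 (pure_strat fa) (pure_strat fb)"
    unfolding util_pure[OF assms(1) assms(3) g2] util_pure[OF assms(1) assms(3,4)]
    using assms g2 by (intro sum_mono mult_left_mono) auto
  qed
qed

lemma dev1: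
  assumes "finite A" "finite S" "s0 \<in> S" "\<forall>s\<in>S. T1 s = T1 s0 \<longrightarrow> s = s0" "0 < P s0"
    "\<forall>t. f1 t \<in> opt A" "\<forall>t. f2 t \<in> opt A" "a \<in> opt A"
    "bayes_util A S P T1 T2 M 1 (pure_strat (f1(T1 s0 := a))) (pure_strat f2)
      \<le> bayes_util A S P T1 T2 M 1 (pure_strat f1) (pure_strat f2)"
  shows "bayes_pay M 1 (T1 s0) (T2 s0) a (f2 (T2 s0)) \<le> bayes_pay M 1 (T1 s0) (T2 s0) (f1 (T1 s0)) (f2 (T2 s0))"
proof -
  have g: "\<forall>t. (f1(T1 s0 := a)) t \<in> opt A" using assms(6,8) by auto
  let ?F = "\<lambda>g s. P s * bayes_pay M 1 (T1 s) (T2 s) (g (T1 s)) (f2 (T2 s))"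
  have "(\<Sum>s\<in>S. ?F (f1(T1 s0 := a)) s) \<le> (\<Sum>s\<in>S. ?F f1 s)"
    using assms(9) unfolding util_pure[OF assms(1) g assms(7)] util_pure[OF assms(1) assms(6,7)] .
  moreover have "(\<Sum>s\<in>S. ?F (f1(T1 s0 := a)) s) = ?F (f1(T1 s0 := a)) s0 + (\<Sum>s\<in>S - {s0}. ?F (f1(T1 s0 := a)) s)"
    using assms(2,3) by (rule sum.remove)
  moreover have "(\<Sum>s\<in>S. ?F f1 s) = ?F f1 s0 + (\<Sum>s\<in>S - {s0}. ?F f1 s)"
    using assms(2,3) by (rule sum.remove)
  moreover have "(\<Sum>s\<in>S - {s0}. ?F (f1(T1 s0 := a)) s) = (\<Sum>s\<in>S - {s0}. ?F f1 s)"
    using assms(4) by (intro sum.cong) auto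
  ultimately have "?F (f1(T1 s0 := a)) s0 \<le> ?F f1 s0" by linarith
  then show ?thesis using assms(5) by (simp add: mult_le_cancel_left_pos)
qed

lemma dev2:
  assumes "finite A" "finite S" "s0 \<in> S" "\<forall>s\<in>S. T2 s = T2 s0 \<longrightarrow> s = s0" "0 < P s0"
    "\<forall>t. f1 t \<in> opt A" "\<forall>t. f2 t \<in> opt A" "b \<in> opt A"
    "bayes_util A S P T1 T2 M 2 (pure_strat f1) (pure_strat (f2(T2 s0 := b)))
      \<le> bayes_util A S P T1 T2 M 2 (pure_strat f1) (pure_strat f2)"
  shows "bayes_pay M 2 (T1 s0) (T2 s0) (f1 (T1 s0)) b \<le> bayes_pay M 2 (T1 s0) (T2 s0) (f1 (T1 s0)) (f2 (T2 s0))"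
proof -
  have g: "\<forall>t. (f2(T2 s0 := b)) t \<in> opt A" using assms(7,8) by auto
  let ?F = "\<lambda>g s. P s * bayes_pay M 2 (T1 s) (T2 s) (f1 (T1 s)) (g (T2 s))"
  have "(\<Sum>s\<in>S. ?F (f2(T2 s0 := b)) s) \<le> (\<Sum>s\<in>S. ?F f2 s)"
    using assms(9) unfolding util_pure[OF assms(1) assms(6) g] util_pure[OF assms(1) assms(6,7)] .
  moreover have "(\<Sum>s\<in>S. ?F (f2(T2 s0 := b)) s) = ?F (f2(T2 s0 := b)) s0 + (\<Sum>s\<in>S - {s0}. ?F (f2(T2 s0 := b)) s)"
    using assms(2,3) by (rule sum.remove)
  moreover have "(\<Sum>s\<in>S. ?F f2 s) = ?F f2 s0 + (\<Sum>s\<in>S - {s0}. ?F f2 s)"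
    using assms(2,3) by (rule sum.remove)
  moreover have "(\<Sum>s\<in>S - {s0}. ?F (f2(T2 s0 := b)) s) = (\<Sum>s\<in>S - {s0}. ?F f2 s)"
    using assms(4) by (intro sum.cong) auto
  ultimately have "?F (f2(T2 s0 := b)) s0 \<le> ?F f2 s0" by linarith
  then show ?thesis using assms(5) by (simp add: mult_le_cancel_left_pos)
qed

definition Pq :: "nat \<Rightarrow> real" where "Pq s = 1/4"
definition pt :: "nat option \<Rightarrow> nat option \<Rightarrow> real" where "pt a = (\<lambda>x. if x = a then 1 else 0)"
definition unif :: "nat option \<Rightarrow> real" where
  "unif x = (if x \<in> {Some 1, Some 2, Some 3} then 1/3 else 0)"
definition sg :: "nat set \<Rightarrow> nat option \<Rightarrow> real" where
  "sg T = (if 1 \<notin> T then pt (Some 2) else if 2 \<notin> T then pt (Some 3) else if 3 \<notin> T then pt (Some 1) else unif)"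
definition fG1 :: "nat set \<Rightarrow> nat option" where "fG1 T = (if 1 \<notin> T then Some 2 else Some 1)"
definition fG2 :: "nat set \<Rightarrow> nat option" where
  "fG2 T = (if 2 \<notin> T then Some 3 else if 3 \<notin> T then Some 1 else None)"

lemma chk_Z1: "\<forall>s\<in>Sd. \<forall>a2\<in>opt AA. (\<Sum>a1\<in>opt AA. sg (Cw s) a1 * bayes_pay Mz 2 (Cw s) (Cl s) a1 a2) \<le> (if s = 0 then 1/2 else 0)"
  by (simp add: Sd_def opt_AA Cw_def Cl_def sg_def pt_def unif_def bayes_pay_def Mz_def m0_def opt_def Let_def)

lemma chk_Z2: "\<forall>s\<in>Sd. \<forall>a1\<in>opt AA. (\<Sum>a2\<in>opt AA. sg (Cw s) a2 * bayes_pay Mz 1 (Cl s) (Cw s) a1 a2) \<le> (if s = 0 then 1/2 else 0)"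
  by (simp add: Sd_def opt_AA Cw_def Cl_def sg_def pt_def unif_def bayes_pay_def Mz_def m0_def opt_def Let_def)

lemma chk_P1: "\<forall>s\<in>Sd. \<forall>a2\<in>opt AA. (\<Sum>a1\<in>opt AA. pure_strat fG1 (Cw s) a1 * bayes_pay Mp 2 (Cw s) (Cl s) a1 a2) \<le> 0"
  by (simp add: Sd_def opt_AA Cw_def Cl_def fG1_def pure_strat_def bayes_pay_def Mp_def mp_def opt_def Let_def)

lemma chk_P2: "\<forall>s\<in>Sd. \<forall>a1\<in>opt AA. (\<Sum>a2\<in>opt AA. pure_strat fG2 (Cw s) a2 * bayes_pay Mp 1 (Cl s) (Cw s) a1 a2) \<le> (if s \<le> 1 then 1 else 0)"
  by (auto simp: Sd_def opt_AA Cw_def Cl_def fG2_def pure_strat_def bayes_pay_def Mp_def mp_def opt_def Let_def)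

lemma chk_pure1:
  "\<forall>s\<in>Sd. \<forall>a\<in>opt AA. bayes_pay Mp 1 (Cw s) (Cl s) a ((\<lambda>_. None) (Cl s)) \<le> bayes_pay Mp 1 (Cw s) (Cl s) (fG1 (Cw s)) ((\<lambda>_. None) (Cl s))"
  "\<forall>s\<in>Sd. \<forall>a\<in>opt AA. bayes_pay Mp 2 (Cw s) (Cl s) (fG1 (Cw s)) a \<le> bayes_pay Mp 2 (Cw s) (Cl s) (fG1 (Cw s)) ((\<lambda>_. None) (Cl s))"
  "\<forall>s\<in>Sd. \<forall>a\<in>opt AA. bayes_pay Mp 1 (Cl s) (Cw s) a (fG2 (Cw s)) \<le> bayes_pay Mp 1 (Cl s) (Cw s) ((\<lambda>_. Some 1) (Cl s)) (fG2 (Cw s))"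
  "\<forall>s\<in>Sd. \<forall>a\<in>opt AA. bayes_pay Mp 2 (Cl s) (Cw s) ((\<lambda>_. Some 1) (Cl s)) a \<le> bayes_pay Mp 2 (Cl s) (Cw s) ((\<lambda>_. Some 1) (Cl s)) (fG2 (Cw s))"
  by (auto simp: Sd_def opt_AA Cw_def Cl_def fG1_def fG2_def bayes_pay_def Mp_def mp_def opt_def Let_def)

lemma pmf_Pq: "pmf_on Sd Pq" unfolding pmf_on_def Sd_def Pq_def by simp
lemma finAA: "finite AA" by simp
lemma finSd: "finite Sd" unfolding Sd_def by simp

lemma mixed_unif: "mixed (opt AA) unif"
  unfolding mixed_def opt_AA unif_def by auto

lemma bstrat_sg: "bstrat AA sg"
proof -
  have p: "mixed (opt AA) (pt (Some k))" if "k \<in> AA" for k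
    unfolding pt_def using that by (intro mixed_point[OF finite_opt[OF finAA]]) (auto simp: opt_def)
  have "mixed (opt AA) (sg T)" for T
    unfolding sg_def using p[of 1] p[of 2] p[of 3] mixed_unif by auto
  then show ?thesis unfolding bstrat_def by auto
qed

lemma sum_Sd: "(\<Sum>s\<in>Sd. Pq s * c s) = (c 0 + c 1 + c 2 + c 3) / 4"
  unfolding Sd_def Pq_def by simp

lemma mixed_bs: "bstrat A s \<Longrightarrow> mixed (opt A) (s t)"
  unfolding bstrat_def by auto

lemma Z_v2: "bayes_v2 AA Sd Pq Cw Cl Mz \<le> 1/8"
proof (rule v2_le[OF finAA pmf_Pq policy_Mz], intro allI impI exI conjI)
  fix s2 assume s2: "bstrat AA s2"
  show "bstrat AA sg" by (rule bstrat_sg)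
  have "bayes_util AA Sd Pq Cw Cl Mz 2 sg s2 \<le> (\<Sum>s\<in>Sd. Pq s * (if s = 0 then 1/2 else 0))"
    apply (rule util_le)
     apply (simp add: Pq_def)
    apply (intro ballI)
    apply (rule inner_le1[OF mixed_bs[OF s2]])
    using chk_Z1 apply blast
    done
  then show "bayes_util AA Sd Pq Cw Cl Mz 2 sg s2 \<le> 1/8" unfolding sum_Sd by simp
qed

lemma Z_v1: "bayes_v1 AA Sd Pq Cl Cw Mz \<le> 1/8"
proof (rule v1_le[OF finAA pmf_Pq policy_Mz], intro allI impI exI conjI)
  fix s1 assume s1: "bstrat AA s1"
  show "bstrat AA sg" by (rule bstrat_sg)
  have "bayes_util AA Sd Pq Cl Cw Mz 1 s1 sg \<le> (\<Sum>s\<in>Sd. Pq s * (if s = 0 then 1/2 else 0))"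
    apply (rule util_le)
     apply (simp add: Pq_def)
    apply (intro ballI)
    apply (rule inner_le2[OF mixed_bs[OF s1]])
    using chk_Z2 apply blast
    done
  then show "bayes_util AA Sd Pq Cl Cw Mz 1 s1 sg \<le> 1/8" unfolding sum_Sd by simp
qed

lemma fG1_opt: "\<forall>t. fG1 t \<in> opt AA" unfolding fG1_def opt_def by auto
lemma fG2_opt: "\<forall>t. fG2 t \<in> opt AA" unfolding fG2_def opt_def by auto

lemma P_v2: "bayes_v2 AA Sd Pq Cw Cl Mp \<le> 0"
proof (rule v2_le[OF finAA pmf_Pq policy_Mp], intro allI impI exI conjI)
  fix s2 assume s2: "bstrat AA s2"
  show "bstrat AA (pure_strat fG1)" by (rule bstrat_pure[OF fG1_opt finAA])
  have "bayes_util AA Sd Pq Cw Cl Mp 2 (pure_strat fG1) s2 \<le> (\<Sum>s\<in>Sd. Pq s * 0)"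
    apply (rule util_le)
     apply (simp add: Pq_def)
    apply (intro ballI)
    apply (rule inner_le1[OF mixed_bs[OF s2]])
    using chk_P1 apply blast
    done
  then show "bayes_util AA Sd Pq Cw Cl Mp 2 (pure_strat fG1) s2 \<le> 0" by simp
qed

lemma P_v1: "bayes_v1 AA Sd Pq Cl Cw Mp \<le> 1/2"
proof (rule v1_le[OF finAA pmf_Pq policy_Mp], intro allI impI exI conjI)
  fix s1 assume s1: "bstrat AA s1"
  show "bstrat AA (pure_strat fG2)" by (rule bstrat_pure[OF fG2_opt finAA])
  have "bayes_util AA Sd Pq Cl Cw Mp 1 s1 (pure_strat fG2) \<le> (\<Sum>s\<in>Sd. Pq s * (if s \<le> 1 then 1 else 0))"
    apply (rule util_le)
     apply (simp add: Pq_def)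
    apply (intro ballI)
    apply (rule inner_le2[OF mixed_bs[OF s1]])
    using chk_P2 apply blast
    done
  then show "bayes_util AA Sd Pq Cl Cw Mp 1 s1 (pure_strat fG2) \<le> 1/2" unfolding sum_Sd by simp
qed

lemma P_pure: "piddg_pure AA Sd Pq Cw Cl Mp"
  unfolding piddg_pure_def
proof
  show "bayes_pure_eq AA Sd Pq Cw Cl Mp"
    using chk_pure1(1,2) fG1_opt None_opt(1)
    by (intro pure_eq_termwise[where fa = fG1 and fb = "\<lambda>_. None"]) (auto simp: Pq_def)
  show "bayes_pure_eq AA Sd Pq Cl Cw Mp"
    using chk_pure1(3,4) fG2_opt
    by (intro pure_eq_termwise[where fa = "\<lambda>_. Some 1" and fb = fG2]) (auto simp: Pq_def opt_def)
qed

lemma pay_full: "a1 \<in> opt AA \<Longrightarrow> a2 \<in> opt AA \<Longrightarrow> bayes_pay M i AA AA a1 a2 = M i a1 a2"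
  by (simp add: bayes_pay_def Let_def)

lemma Cw0: "Cw 0 = AA" and Cl0: "Cl 0 = AA" by (simp_all add: Cw_def Cl_def)

lemma mixed_ne: "Collect (mixed (opt AA)) \<noteq> {}"
  using mixed_point[OF finite_opt[OF finAA] None_opt(1)] by blast

lemma inner_nonneg:
  assumes "policy (opt AA) (opt AA) M" "mixed (opt AA) x" "mixed (opt AA) y" "i \<in> {1,2}"
  shows "0 \<le> (\<Sum>a1\<in>opt AA. \<Sum>a2\<in>opt AA. x a1 * y a2 * bayes_pay M i T1 T2 a1 a2)"
  using inner_bnd[OF assms(2,3)] pay_bnd[OF assms(1) _ _ assms(4)] by blast

lemma L_v1:
  assumes pol: "policy (opt AA) (opt AA) M"
  shows "mm (opt AA) (opt AA) (M 1) \<le> 4 * bayes_v1 AA Sd Pq Cl Cw M"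
  unfolding mm_def
proof (rule cSUP_least[OF mixed_ne])
  fix x assume "x \<in> Collect (mixed (opt AA))"
  then have x: "mixed (opt AA) x" by simp
  define h where "h = (INF b\<in>opt AA. \<Sum>a\<in>opt AA. x a * M 1 a b)"
  have "h / 4 \<le> bayes_v1 AA Sd Pq Cl Cw M"
  proof (rule v1_ge[OF finAA pmf_Pq pol, where sx = "\<lambda>_. x"])
    show "bstrat AA (\<lambda>_. x)" using x unfolding bstrat_def by simp
    show "\<forall>s2. bstrat AA s2 \<longrightarrow> h / 4 \<le> bayes_util AA Sd Pq Cl Cw M 1 (\<lambda>_. x) s2"
    proof (intro allI impI)
      fix s2 assume s2: "bstrat AA s2"
      have inner0: "h \<le> (\<Sum>a1\<in>opt AA. \<Sum>a2\<in>opt AA. x a1 * s2 (Cw 0) a2 * bayes_pay M 1 (Cl 0) (Cw 0) a1 a2)"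
        unfolding Cw0 Cl0
      proof (rule inner_ge1[OF mixed_bs[OF s2]], intro ballI)
        fix a2 assume a2: "a2 \<in> opt AA"
        have e: "(\<Sum>a1\<in>opt AA. x a1 * bayes_pay M 1 AA AA a1 a2) = (\<Sum>a1\<in>opt AA. x a1 * M 1 a1 a2)"
        proof (rule sum.cong[OF refl])
          fix a1 assume a1: "a1 \<in> opt AA"
          show "x a1 * bayes_pay M 1 AA AA a1 a2 = x a1 * M 1 a1 a2" by (simp only: pay_full[OF a1 a2])
        qed
        have "h \<le> (\<Sum>a1\<in>opt AA. x a1 * M 1 a1 a2)"
          unfolding h_def by (rule cINF_lower) (use a2 finite_opt[OF finAA] in auto)
        then show "h \<le> (\<Sum>a1\<in>opt AA. x a1 * bayes_pay M 1 AA AA a1 a2)" unfolding e .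
      qed
      have "(\<Sum>s\<in>Sd. Pq s * (if s = 0 then h else 0)) \<le> bayes_util AA Sd Pq Cl Cw M 1 (\<lambda>_. x) s2"
      proof (rule util_ge)
        show "\<forall>s\<in>Sd. 0 \<le> Pq s" by (simp add: Pq_def)
        show "\<forall>s\<in>Sd. (if s = 0 then h else 0) \<le> (\<Sum>a1\<in>opt AA. \<Sum>a2\<in>opt AA. (\<lambda>_. x) (Cl s) a1 * s2 (Cw s) a2 * bayes_pay M 1 (Cl s) (Cw s) a1 a2)"
        proof
          fix s assume "s \<in> Sd"
          show "(if s = 0 then h else 0) \<le> (\<Sum>a1\<in>opt AA. \<Sum>a2\<in>opt AA. (\<lambda>_. x) (Cl s) a1 * s2 (Cw s) a2 * bayes_pay M 1 (Cl s) (Cw s) a1 a2)"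
            using inner0 inner_nonneg[OF pol x mixed_bs[OF s2], of 1] by (cases "s = 0") auto
        qed
      qed
      then show "h / 4 \<le> bayes_util AA Sd Pq Cl Cw M 1 (\<lambda>_. x) s2" unfolding sum_Sd by simp
    qed
  qed
  then show "h \<le> 4 * bayes_v1 AA Sd Pq Cl Cw M" by simp
qed

lemma L_v2:
  assumes pol: "policy (opt AA) (opt AA) M"
  shows "mm (opt AA) (opt AA) (\<lambda>b a. M 2 a b) \<le> 4 * bayes_v2 AA Sd Pq Cw Cl M"
  unfolding mm_def
proof (rule cSUP_least[OF mixed_ne])
  fix y assume "y \<in> Collect (mixed (opt AA))"
  then have y: "mixed (opt AA) y" by simp
  define h where "h = (INF a\<in>opt AA. \<Sum>b\<in>opt AA. y b * M 2 a b)"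
  have "h / 4 \<le> bayes_v2 AA Sd Pq Cw Cl M"
  proof (rule v2_ge[OF finAA pmf_Pq pol, where sy = "\<lambda>_. y"])
    show "bstrat AA (\<lambda>_. y)" using y unfolding bstrat_def by simp
    show "\<forall>s1. bstrat AA s1 \<longrightarrow> h / 4 \<le> bayes_util AA Sd Pq Cw Cl M 2 s1 (\<lambda>_. y)"
    proof (intro allI impI)
      fix s1 assume s1: "bstrat AA s1"
      have inner0: "h \<le> (\<Sum>a1\<in>opt AA. \<Sum>a2\<in>opt AA. s1 (Cw 0) a1 * y a2 * bayes_pay M 2 (Cw 0) (Cl 0) a1 a2)"
        unfolding Cw0 Cl0
      proof (rule inner_ge2[OF mixed_bs[OF s1]], intro ballI)
        fix a1 assume a1: "a1 \<in> opt AA"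
        have e: "(\<Sum>a2\<in>opt AA. y a2 * bayes_pay M 2 AA AA a1 a2) = (\<Sum>a2\<in>opt AA. y a2 * M 2 a1 a2)"
        proof (rule sum.cong[OF refl])
          fix a2 assume a2: "a2 \<in> opt AA"
          show "y a2 * bayes_pay M 2 AA AA a1 a2 = y a2 * M 2 a1 a2" by (simp only: pay_full[OF a1 a2])
        qed
        have "h \<le> (\<Sum>a2\<in>opt AA. y a2 * M 2 a1 a2)"
          unfolding h_def by (rule cINF_lower) (use a1 finite_opt[OF finAA] in auto)
        then show "h \<le> (\<Sum>a2\<in>opt AA. y a2 * bayes_pay M 2 AA AA a1 a2)" unfolding e .
      qed
      have "(\<Sum>s\<in>Sd. Pq s * (if s = 0 then h else 0)) \<le> bayes_util AA Sd Pq Cw Cl M 2 s1 (\<lambda>_. y)"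
      proof (rule util_ge)
        show "\<forall>s\<in>Sd. 0 \<le> Pq s" by (simp add: Pq_def)
        show "\<forall>s\<in>Sd. (if s = 0 then h else 0) \<le> (\<Sum>a1\<in>opt AA. \<Sum>a2\<in>opt AA. s1 (Cw s) a1 * (\<lambda>_. y) (Cl s) a2 * bayes_pay M 2 (Cw s) (Cl s) a1 a2)"
        proof
          fix s assume "s \<in> Sd"
          show "(if s = 0 then h else 0) \<le> (\<Sum>a1\<in>opt AA. \<Sum>a2\<in>opt AA. s1 (Cw s) a1 * (\<lambda>_. y) (Cl s) a2 * bayes_pay M 2 (Cw s) (Cl s) a1 a2)"
            using inner0 inner_nonneg[OF pol mixed_bs[OF s1] y, of 2] by (cases "s = 0") auto
        qed
      qed
      then show "h / 4 \<le> bayes_util AA Sd Pq Cw Cl M 2 s1 (\<lambda>_. y)" unfolding sum_Sd by simp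
    qed
  qed
  then show "h \<le> 4 * bayes_v2 AA Sd Pq Cw Cl M" by simp
qed

lemma L_all:
  assumes pol: "policy (opt AA) (opt AA) M"
  shows "1/8 \<le> piddg_error AA Sd Pq Cw Cl M"
proof -
  have bnd: "\<forall>a\<in>opt AA. \<forall>b\<in>opt AA. 0 \<le> M 1 a b \<and> M 1 a b \<le> 1"
    using policy_bnd1[OF pol] by blast
  have mmx: "1 \<le> mm (opt AA) (opt AA) (M 1) + mm (opt AA) (opt AA) (\<lambda>b a. 1 - M 1 a b)"
    by (rule minimax[OF finite_opt[OF finAA] finite_opt[OF finAA] None_opt(2) None_opt(2) bnd])
  have "mm (opt AA) (opt AA) (\<lambda>b a. M 2 a b) = mm (opt AA) (opt AA) (\<lambda>b a. 1 - M 1 a b)"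
    using policy_sum[OF pol] by (intro mm_cong) auto
  then show ?thesis unfolding piddg_error_def using mmx L_v1[OF pol] L_v2[OF pol] by simp
qed

lemma pay1_ge: "a \<in> opt T1 \<Longrightarrow> (a2 \<in> opt T2 \<Longrightarrow> c \<le> M 1 a a2) \<Longrightarrow> c \<le> 1 \<Longrightarrow> c \<le> bayes_pay M 1 T1 T2 a a2"
  by (auto simp: bayes_pay_def Let_def)

lemma pay2_ge: "b \<in> opt T2 \<Longrightarrow> (a1 \<in> opt T1 \<Longrightarrow> c \<le> M 2 a1 b) \<Longrightarrow> c \<le> 1 \<Longrightarrow> c \<le> bayes_pay M 2 T1 T2 a1 b"
  by (auto simp: bayes_pay_def Let_def)

lemma inj_Cw: "\<forall>s\<in>Sd. Cw s = Cw 0 \<longrightarrow> s = 0"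
proof
  fix s assume "s \<in> Sd"
  show "Cw s = Cw 0 \<longrightarrow> s = 0"
  proof
    assume h: "Cw s = Cw 0"
    show "s = 0"
    proof (rule ccontr)
      assume "s \<noteq> 0"
      then have "s \<in> AA" using \<open>s \<in> Sd\<close> unfolding Sd_def by auto
      moreover have "s \<notin> Cw s" using \<open>s \<noteq> 0\<close> unfolding Cw_def by auto
      ultimately show False using h unfolding Cw0 by simp
    qed
  qed
qed

lemma inj_Cl: "\<forall>s\<in>Sd. Cl s = Cl 0 \<longrightarrow> s = 0"
  unfolding Sd_def Cl_def by auto

lemma sum_point_pure: "(\<Sum>a1\<in>opt AA. pure_strat (\<lambda>_. a) t a1 * g a1) = (g a :: real)" if "a \<in> opt AA"
  unfolding pure_strat_def using sum_point[OF finite_opt[OF finAA] that] .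

lemma sum_point_pure2: "(\<Sum>a2\<in>opt AA. pure_strat (\<lambda>_. b) t a2 * g a2) = (g b :: real)" if "b \<in> opt AA"
  unfolding pure_strat_def using sum_point[OF finite_opt[OF finAA] that] .

lemma Cl_sub: "s \<in> Sd \<Longrightarrow> opt (Cl s) \<subseteq> opt AA" and Cw_sub: "s \<in> Sd \<Longrightarrow> opt (Cw s) \<subseteq> opt AA"
  by (auto simp: Sd_def Cl_def Cw_def opt_def)

lemma sumk: "k \<in> AA \<Longrightarrow> (\<Sum>s\<in>Sd. Pq s * (if s = 0 \<or> s = k then v else 0)) = v / 2"
  unfolding sum_Sd by auto

lemma L_pure:
  assumes pol: "policy (opt AA) (opt AA) M" and pure: "piddg_pure AA Sd Pq Cw Cl M"
  shows "1/4 \<le> piddg_error AA Sd Pq Cw Cl M"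
proof -
  from pure have "bayes_pure_eq AA Sd Pq Cw Cl M" by (simp add: piddg_pure_def)
  then obtain f1 f2 where f1: "\<forall>t. f1 t \<in> opt AA" and f2: "\<forall>t. f2 t \<in> opt AA"
    and d1: "\<forall>g1. (\<forall>t. g1 t \<in> opt AA) \<longrightarrow>
        bayes_util AA Sd Pq Cw Cl M 1 (pure_strat g1) (pure_strat f2)
          \<le> bayes_util AA Sd Pq Cw Cl M 1 (pure_strat f1) (pure_strat f2)"
    and d2: "\<forall>g2. (\<forall>t. g2 t \<in> opt AA) \<longrightarrow>
        bayes_util AA Sd Pq Cw Cl M 2 (pure_strat f1) (pure_strat g2)
          \<le> bayes_util AA Sd Pq Cw Cl M 2 (pure_strat f1) (pure_strat f2)"
    unfolding bayes_pure_eq_def by blast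
  define a where "a = f1 AA"
  define b where "b = f2 AA"
  have a: "a \<in> opt AA" and b: "b \<in> opt AA" using f1 f2 unfolding a_def b_def by auto
  have P0: "0 < Pq 0" by (simp add: Pq_def)
  have s0: "0 \<in> Sd" by (simp add: Sd_def)
  have sad1: "M 1 a' b \<le> M 1 a b" if a': "a' \<in> opt AA" for a'
  proof -
    have g: "\<forall>t. (f1(Cw 0 := a')) t \<in> opt AA" using f1 a' by auto
    have "bayes_pay M 1 (Cw 0) (Cl 0) a' (f2 (Cl 0)) \<le> bayes_pay M 1 (Cw 0) (Cl 0) (f1 (Cw 0)) (f2 (Cl 0))"
      by (rule dev1[of AA Sd 0 Cw Pq f1 f2 a' Cl M, OF finAA finSd s0 inj_Cw P0 f1 f2 a']) (use d1 g in blast)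
    then show ?thesis unfolding Cw0 Cl0 a_def[symmetric] b_def[symmetric] pay_full[OF a' b] pay_full[OF a b] .
  qed
  have sad2: "M 2 a b' \<le> M 2 a b" if b': "b' \<in> opt AA" for b'
  proof -
    have g: "\<forall>t. (f2(Cl 0 := b')) t \<in> opt AA" using f2 b' by auto
    have "bayes_pay M 2 (Cw 0) (Cl 0) (f1 (Cw 0)) b' \<le> bayes_pay M 2 (Cw 0) (Cl 0) (f1 (Cw 0)) (f2 (Cl 0))"
      by (rule dev2[of AA Sd 0 Cl Pq f1 f2 b' Cw M, OF finAA finSd s0 inj_Cl P0 f1 f2 b']) (use d2 g in blast)
    then show ?thesis unfolding Cw0 Cl0 a_def[symmetric] b_def[symmetric] pay_full[OF a b'] pay_full[OF a b] .
  qed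
  have row: "M 1 a b \<le> M 1 a a2" if "a2 \<in> opt AA" for a2
    using sad2[OF that] policy_sum[OF pol a that] policy_sum[OF pol a b] by simp
  have col: "M 2 a b \<le> M 2 a1 b" if "a1 \<in> opt AA" for a1
    using sad1[OF that] policy_sum[OF pol that b] policy_sum[OF pol a b] by simp
  have M1le: "M 1 a b \<le> 1" and M2le: "M 2 a b \<le> 1" using pol a b unfolding policy_def by auto
  obtain k where k: "k \<in> AA" "a \<in> opt {k}" using cover[OF a] by blast
  obtain k' where k': "k' \<in> AA" "b \<in> opt {k'}" using cover[OF b] by blast
  have v1: "M 1 a b / 2 \<le> bayes_v1 AA Sd Pq Cl Cw M"
  proof (rule v1_ge[OF finAA pmf_Pq pol, where sx = "pure_strat (\<lambda>_. a)"])
    show "bstrat AA (pure_strat (\<lambda>_. a))" using bstrat_pure[OF _ finAA] a by auto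
    show "\<forall>s2. bstrat AA s2 \<longrightarrow> M 1 a b / 2 \<le> bayes_util AA Sd Pq Cl Cw M 1 (pure_strat (\<lambda>_. a)) s2"
    proof (intro allI impI)
      fix s2 assume s2: "bstrat AA s2"
      have "(\<Sum>s\<in>Sd. Pq s * (if s = 0 \<or> s = k then M 1 a b else 0)) \<le> bayes_util AA Sd Pq Cl Cw M 1 (pure_strat (\<lambda>_. a)) s2"
      proof (rule util_ge)
        show "\<forall>s\<in>Sd. 0 \<le> Pq s" by (simp add: Pq_def)
        show "\<forall>s\<in>Sd. (if s = 0 \<or> s = k then M 1 a b else 0) \<le> (\<Sum>a1\<in>opt AA. \<Sum>a2\<in>opt AA. pure_strat (\<lambda>_. a) (Cl s) a1 * s2 (Cw s) a2 * bayes_pay M 1 (Cl s) (Cw s) a1 a2)"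
        proof
          fix s assume s: "s \<in> Sd"
          show "(if s = 0 \<or> s = k then M 1 a b else 0) \<le> (\<Sum>a1\<in>opt AA. \<Sum>a2\<in>opt AA. pure_strat (\<lambda>_. a) (Cl s) a1 * s2 (Cw s) a2 * bayes_pay M 1 (Cl s) (Cw s) a1 a2)"
          proof (rule inner_ge1[OF mixed_bs[OF s2]], intro ballI)
            fix a2 assume a2: "a2 \<in> opt AA"
            have "(if s = 0 \<or> s = k then M 1 a b else 0) \<le> bayes_pay M 1 (Cl s) (Cw s) a a2"
            proof (cases "s = 0 \<or> s = k")
              case True
              have "a \<in> opt (Cl s)" using True k a by (auto simp: Cl_def)
              then have "M 1 a b \<le> bayes_pay M 1 (Cl s) (Cw s) a a2"
                using row[OF a2] M1le by (intro pay1_ge) auto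
              then show ?thesis using True by simp
            next
              case False
              then show ?thesis using pay_bnd[OF pol a a2, of 1] by simp
            qed
            then show "(if s = 0 \<or> s = k then M 1 a b else 0) \<le> (\<Sum>a1\<in>opt AA. pure_strat (\<lambda>_. a) (Cl s) a1 * bayes_pay M 1 (Cl s) (Cw s) a1 a2)"
              unfolding sum_point_pure[OF a] .
          qed
        qed
      qed
      then show "M 1 a b / 2 \<le> bayes_util AA Sd Pq Cl Cw M 1 (pure_strat (\<lambda>_. a)) s2"
        unfolding sumk[OF k(1)] .
    qed
  qed
  have v2: "M 2 a b / 2 \<le> bayes_v2 AA Sd Pq Cw Cl M"
  proof (rule v2_ge[OF finAA pmf_Pq pol, where sy = "pure_strat (\<lambda>_. b)"])
    show "bstrat AA (pure_strat (\<lambda>_. b))" using bstrat_pure[OF _ finAA] b by auto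
    show "\<forall>s1. bstrat AA s1 \<longrightarrow> M 2 a b / 2 \<le> bayes_util AA Sd Pq Cw Cl M 2 s1 (pure_strat (\<lambda>_. b))"
    proof (intro allI impI)
      fix s1 assume s1: "bstrat AA s1"
      have "(\<Sum>s\<in>Sd. Pq s * (if s = 0 \<or> s = k' then M 2 a b else 0)) \<le> bayes_util AA Sd Pq Cw Cl M 2 s1 (pure_strat (\<lambda>_. b))"
      proof (rule util_ge)
        show "\<forall>s\<in>Sd. 0 \<le> Pq s" by (simp add: Pq_def)
        show "\<forall>s\<in>Sd. (if s = 0 \<or> s = k' then M 2 a b else 0) \<le> (\<Sum>a1\<in>opt AA. \<Sum>a2\<in>opt AA. s1 (Cw s) a1 * pure_strat (\<lambda>_. b) (Cl s) a2 * bayes_pay M 2 (Cw s) (Cl s) a1 a2)"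
        proof
          fix s assume s: "s \<in> Sd"
          show "(if s = 0 \<or> s = k' then M 2 a b else 0) \<le> (\<Sum>a1\<in>opt AA. \<Sum>a2\<in>opt AA. s1 (Cw s) a1 * pure_strat (\<lambda>_. b) (Cl s) a2 * bayes_pay M 2 (Cw s) (Cl s) a1 a2)"
          proof (rule inner_ge2[OF mixed_bs[OF s1]], intro ballI)
            fix a1 assume a1: "a1 \<in> opt AA"
            have "(if s = 0 \<or> s = k' then M 2 a b else 0) \<le> bayes_pay M 2 (Cw s) (Cl s) a1 b"
            proof (cases "s = 0 \<or> s = k'")
              case True
              have "b \<in> opt (Cl s)" using True k' b by (auto simp: Cl_def)
              then have "M 2 a b \<le> bayes_pay M 2 (Cw s) (Cl s) a1 b"
                using col[OF a1] M2le by (intro pay2_ge) auto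
              then show ?thesis using True by simp
            next
              case False
              then show ?thesis using pay_bnd[OF pol a1 b, of 2] by simp
            qed
            then show "(if s = 0 \<or> s = k' then M 2 a b else 0) \<le> (\<Sum>a2\<in>opt AA. pure_strat (\<lambda>_. b) (Cl s) a2 * bayes_pay M 2 (Cw s) (Cl s) a1 a2)"
              unfolding sum_point_pure2[OF b] .
          qed
        qed
      qed
      then show "M 2 a b / 2 \<le> bayes_util AA Sd Pq Cw Cl M 2 s1 (pure_strat (\<lambda>_. b))"
        unfolding sumk[OF k'(1)] .
    qed
  qed
  show ?thesis unfolding piddg_error_def using v1 v2 policy_sum[OF pol a b] by simp
qed

lemma ckddg_q: "ckddg AA Sd Pq Cw Cl"
  unfolding ckddg_def pmf_on_def Sd_def by (auto simp: Pq_def Cw_def Cl_def)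

lemma part3:
  "\<exists>(A::nat set) (S::nat set) P Cw Cl.
            ckddg A S P Cw Cl \<and>
            strict_min_gap (policy (opt A) (opt A)) (piddg_pure A S P Cw Cl) (piddg_error A S P Cw Cl)"
proof (intro exI conjI)
  show "ckddg AA Sd Pq Cw Cl" by (rule ckddg_q)
  show "strict_min_gap (policy (opt AA) (opt AA)) (piddg_pure AA Sd Pq Cw Cl) (piddg_error AA Sd Pq Cw Cl)"
  proof (rule gap_intro[where Ma = Mz and Mb = Mp and ea = "1/8" and eb = "1/4"])
    show "policy (opt AA) (opt AA) Mz" "policy (opt AA) (opt AA) Mp" by (rule policy_Mz policy_Mp)+
    show "1/8 \<le> piddg_error AA Sd Pq Cw Cl M" if "policy (opt AA) (opt AA) M" for M
      by (rule L_all[OF that])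
    show "piddg_error AA Sd Pq Cw Cl Mz \<le> 1/8" unfolding piddg_error_def using Z_v1 Z_v2 by simp
    show "piddg_error AA Sd Pq Cw Cl Mp \<le> 1/4" unfolding piddg_error_def using P_v1 P_v2 by simp
    show "(1/8::real) < 1/4" by simp
    show "piddg_pure AA Sd Pq Cw Cl Mp" by (rule P_pure)
    show "1/4 \<le> piddg_error AA Sd Pq Cw Cl M"
      if "policy (opt AA) (opt AA) M" "piddg_pure AA Sd Pq Cw Cl M" for M
      by (rule L_pure[OF that])
  qed
qed

theorem proposition3p7:
  shows "(\<exists>(A1::nat set) (A2::nat set) (S::nat set) P C1 C2 u.
            ckdg A1 A2 S P C1 C2 u \<and>
            strict_min_gap (policy (opt A1) (opt A2)) (ckdg_pure S C1 C2) (ckdg_error S P C1 C2 u))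
       \<and> (\<exists>(A::nat set) (S::nat set) P Cw Cl.
            ckddg A S P Cw Cl \<and>
            strict_min_gap (policy (opt A) (opt A)) (ckddg_pure S Cw Cl) (ckddg_error S P Cw Cl))
       \<and> (\<exists>(A::nat set) (S::nat set) P Cw Cl.
            ckddg A S P Cw Cl \<and>
            strict_min_gap (policy (opt A) (opt A)) (piddg_pure A S P Cw Cl) (piddg_error A S P Cw Cl))"
  using part1 part2 part3 by blast

end
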